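(* Let $K,H$ be finite dimensional Hilbert spaces and $\phi:B(K)\to B(H)$ a positive linear map, and let $k\ge1$. (i) Assume $\phi\neq0$, and let $\phi_{cp}:B(K)\to B(H)$ be the linear map with Choi matrix $C_{\phi_{cp}}=1-\|C_\phi^+\|^{-1}C_\phi$. Then $\phi$ is $k$-positive if and only if $\sup\{(C_{\phi_{cp}}x,x): x\in S(k),\ \|x\|=1\}\le 1$. (ii) Suppose $k<\min(\dim K,\dim H)$ and there exists a unit vector $y=\sum_{i=1}^k x_i\otimes y_i\in S(k)$ ($x_i\in K$, $y_i\in H$) such that $(C_\phi y, y)=0$ and $C_\phi y\notin X\otimes Y$, where $X=\mathrm{span}(x_i)$ and $Y=\mathrm{span}(y_i)$. Then $\phi$ is not $(k+1)$-positive.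
   Context: Fix matrix units $(e_{ij})$ for $B(K)$; the Choi matrix of $\phi$ is $C_\phi=\sum_{i,j}e_{ij}\otimes\phi(e_{ij})\in B(K\otimes H)$, self-adjoint for positive $\phi$, and $C_\phi^+$ denotes its positive part (in $C_\phi=C_\phi^+-C_\phi^-$ with $C_\phi^\pm\ge0$ of orthogonal supports). $S(k)$ (the Schmidt class) is the set of vectors in $K\otimes H$ of the form $\sum_{i=1}^k x_i\otimes y_i$ with $x_i\in K$, $y_i\in H$ (not necessarily all nonzero). A map $\phi$ is $k$-positive if $\phi\otimes\iota:B(K\otimes L)\to B(H\otimes L)$ is positive for a $k$-dimensional Hilbert space $L$. *)

theory Defs
  imports Complex_Main
begin

text \<open>Finite dimensional Hilbert spaces are modelled as coordinate spaces
  indexed by a finite type: K = complex^'k, H = complex^'h.  Vectors of a space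
  indexed by 'a are functions 'a => complex, operators are matrices
  'a => 'a => complex (A i j = entry in row i, column j).  The tensor product
  K (x) H is indexed by 'k * 'h.\<close>

definition mat_vec :: "('a::finite \<Rightarrow> 'a \<Rightarrow> complex) \<Rightarrow> ('a \<Rightarrow> complex) \<Rightarrow> ('a \<Rightarrow> complex)" where
  "mat_vec A v = (\<lambda>i. \<Sum>j\<in>UNIV. A i j * v j)"

text \<open>Inner product (u,v), linear in the first argument.\<close>
definition cinner :: "('a::finite \<Rightarrow> complex) \<Rightarrow> ('a \<Rightarrow> complex) \<Rightarrow> complex" where
  "cinner u v = (\<Sum>i\<in>UNIV. u i * cnj (v i))"

definition vnorm :: "('a::finite \<Rightarrow> complex) \<Rightarrow> real" where
  "vnorm v = sqrt (\<Sum>i\<in>UNIV. (cmod (v i))\<^sup>2)"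

definition psd :: "('a::finite \<Rightarrow> 'a \<Rightarrow> complex) \<Rightarrow> bool" where
  "psd A \<longleftrightarrow> (\<forall>v. Im (cinner (mat_vec A v) v) = 0 \<and> 0 \<le> Re (cinner (mat_vec A v) v))"

text \<open>Positivity of an operator on the subspace of vectors indexed by a set I
  (used for K (x) L with L = complex^k, indexed by 'k * {..<k}).\<close>
definition psd_on :: "'a set \<Rightarrow> ('a \<Rightarrow> 'a \<Rightarrow> complex) \<Rightarrow> bool" where
  "psd_on I A \<longleftrightarrow> (\<forall>v. let q = (\<Sum>i\<in>I. \<Sum>j\<in>I. A i j * v j * cnj (v i))
                         in Im q = 0 \<and> 0 \<le> Re q)"

definition clinear_map :: "(('a \<Rightarrow> 'a \<Rightarrow> complex) \<Rightarrow> ('b \<Rightarrow> 'b \<Rightarrow> complex)) \<Rightarrow> bool" where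
  "clinear_map \<phi> \<longleftrightarrow>
     (\<forall>A B. \<phi> (\<lambda>i j. A i j + B i j) = (\<lambda>a b. \<phi> A a b + \<phi> B a b)) \<and>
     (\<forall>c A. \<phi> (\<lambda>i j. c * A i j) = (\<lambda>a b. c * \<phi> A a b))"

definition positive_map :: "(('a::finite \<Rightarrow> 'a \<Rightarrow> complex) \<Rightarrow> ('b::finite \<Rightarrow> 'b \<Rightarrow> complex)) \<Rightarrow> bool" where
  "positive_map \<phi> \<longleftrightarrow> (\<forall>A. psd A \<longrightarrow> psd (\<phi> A))"

text \<open>phi (x) id on B(K (x) L), L = complex^k indexed by {..<k}:
  (phi (x) id)(sum a_pq (x) e_pq) = sum phi(a_pq) (x) e_pq.\<close>
definition tensor_id :: "(('a \<Rightarrow> 'a \<Rightarrow> complex) \<Rightarrow> ('b \<Rightarrow> 'b \<Rightarrow> complex))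
     \<Rightarrow> ('a \<times> nat \<Rightarrow> 'a \<times> nat \<Rightarrow> complex) \<Rightarrow> ('b \<times> nat \<Rightarrow> 'b \<times> nat \<Rightarrow> complex)" where
  "tensor_id \<phi> A = (\<lambda>(a, p) (b, q). \<phi> (\<lambda>i j. A (i, p) (j, q)) a b)"

definition k_positive :: "nat \<Rightarrow> (('a::finite \<Rightarrow> 'a \<Rightarrow> complex) \<Rightarrow> ('b::finite \<Rightarrow> 'b \<Rightarrow> complex)) \<Rightarrow> bool" where
  "k_positive k \<phi> \<longleftrightarrow>
     (\<forall>A. psd_on (UNIV \<times> {..<k}) A \<longrightarrow> psd_on (UNIV \<times> {..<k}) (tensor_id \<phi> A))"

definition mat_unit :: "'a \<Rightarrow> 'a \<Rightarrow> ('a \<Rightarrow> 'a \<Rightarrow> complex)" where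
  "mat_unit i j = (\<lambda>r s. if r = i \<and> s = j then 1 else 0)"

text \<open>Choi matrix C_phi = sum_ij e_ij (x) phi(e_ij) in B(K (x) H).\<close>
definition choi :: "(('a \<Rightarrow> 'a \<Rightarrow> complex) \<Rightarrow> ('b \<Rightarrow> 'b \<Rightarrow> complex)) \<Rightarrow> ('a \<times> 'b \<Rightarrow> 'a \<times> 'b \<Rightarrow> complex)" where
  "choi \<phi> = (\<lambda>(i, a) (j, b). \<phi> (mat_unit i j) a b)"

definition pos_part :: "('a::finite \<Rightarrow> 'a \<Rightarrow> complex) \<Rightarrow> ('a \<Rightarrow> 'a \<Rightarrow> complex)" where
  "pos_part C = (THE P. let N = (\<lambda>i j. P i j - C i j) in
       psd P \<and> psd N \<and> (\<forall>u v. cinner (mat_vec P u) (mat_vec N v) = 0))"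

definition opnorm :: "('a::finite \<Rightarrow> 'a \<Rightarrow> complex) \<Rightarrow> real" where
  "opnorm A = (SUP v\<in>{v. vnorm v = 1}. vnorm (mat_vec A v))"

definition choi_cp :: "(('a::finite \<Rightarrow> 'a \<Rightarrow> complex) \<Rightarrow> ('b::finite \<Rightarrow> 'b \<Rightarrow> complex)) \<Rightarrow> ('a \<times> 'b \<Rightarrow> 'a \<times> 'b \<Rightarrow> complex)" where
  "choi_cp \<phi> = (\<lambda>x y. (if x = y then 1 else 0)
       - complex_of_real (inverse (opnorm (pos_part (choi \<phi>)))) * choi \<phi> x y)"

definition schmidt :: "nat \<Rightarrow> ('a \<times> 'b \<Rightarrow> complex) set" where
  "schmidt k = {v. \<exists>(x :: nat \<Rightarrow> 'a \<Rightarrow> complex) (y :: nat \<Rightarrow> 'b \<Rightarrow> complex).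
                    v = (\<lambda>(a, b). \<Sum>i<k. x i a * y i b)}"

definition cspan :: "('a \<Rightarrow> complex) set \<Rightarrow> ('a \<Rightarrow> complex) set" where
  "cspan S = {v. \<exists>F c. finite F \<and> F \<subseteq> S \<and> v = (\<lambda>z. \<Sum>u\<in>F. c u * u z)}"

definition tensor_sub :: "('a \<Rightarrow> complex) set \<Rightarrow> ('b \<Rightarrow> complex) set \<Rightarrow> ('a \<times> 'b \<Rightarrow> complex) set" where
  "tensor_sub X Y = cspan {(\<lambda>(a, b). u a * w b) | u w. u \<in> X \<and> w \<in> Y}"

end

theory Submission
  imports Defs "HOL-Analysis.Analysis"
begin

definition qfo :: "'a set \<Rightarrow> ('a \<Rightarrow> 'a \<Rightarrow> complex) \<Rightarrow> ('a \<Rightarrow> complex) \<Rightarrow> complex" where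
  "qfo I A v = (\<Sum>i\<in>I. \<Sum>j\<in>I. A i j * v j * cnj (v i))"

definition ev :: "'a \<Rightarrow> 'a \<Rightarrow> complex" where
  "ev i = (\<lambda>x. if x = i then 1 else 0)"

definition herm_on :: "'a set \<Rightarrow> ('a \<Rightarrow> 'a \<Rightarrow> complex) \<Rightarrow> bool" where
  "herm_on I A \<longleftrightarrow> (\<forall>i\<in>I. \<forall>j\<in>I. A j i = cnj (A i j))"

lemma psd_on_qfo: "psd_on I A \<longleftrightarrow> (\<forall>v. Im (qfo I A v) = 0 \<and> 0 \<le> Re (qfo I A v))"
  unfolding psd_on_def qfo_def Let_def by simp

lemma cinner_mat_vec_qfo: "cinner (mat_vec A v) v = qfo UNIV A v"
  unfolding cinner_def mat_vec_def qfo_def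
  by (simp add: sum_distrib_right mult.assoc)

lemma psd_psd_on: "psd A \<longleftrightarrow> psd_on UNIV A"
  unfolding psd_def psd_on_qfo cinner_mat_vec_qfo by simp

lemma sum_ev2:
  assumes "finite I" "i \<in> I" "j \<in> I" "i \<noteq> j"
  shows "(\<Sum>b\<in>I. f b * (\<alpha> * ev i b + \<beta> * ev j b)) = f i * \<alpha> + f j * \<beta>"
proof -
  have "(\<Sum>b\<in>I. f b * (\<alpha> * ev i b + \<beta> * ev j b)) = (\<Sum>b\<in>I. (if b = i then f b * \<alpha> else 0)) + (\<Sum>b\<in>I. (if b = j then f b * \<beta> else 0))"
    unfolding sum.distrib[symmetric] using assms by (intro sum.cong) (auto simp: ev_def)
  also have "\<dots> = f i * \<alpha> + f j * \<beta>" using assms by (simp add: sum.delta')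
  finally show ?thesis .
qed

lemma sum_ev1:
  assumes "finite I" "i \<in> I"
  shows "(\<Sum>b\<in>I. f b * (\<alpha> * ev i b)) = f i * \<alpha>"
proof -
  have "(\<Sum>b\<in>I. f b * (\<alpha> * ev i b)) = (\<Sum>b\<in>I. (if b = i then f b * \<alpha> else 0))"
    by (rule sum.cong) (auto simp: ev_def)
  also have "\<dots> = f i * \<alpha>" using assms by (simp add: sum.delta')
  finally show ?thesis .
qed

lemma qfo_ev2:
  assumes "finite I" "i \<in> I" "j \<in> I" "i \<noteq> j"
  shows "qfo I A (\<lambda>x. \<alpha> * ev i x + \<beta> * ev j x) =
     A i i * \<alpha> * cnj \<alpha> + A j j * \<beta> * cnj \<beta> + A i j * \<beta> * cnj \<alpha> + A j i * \<alpha> * cnj \<beta>"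
proof -
  have c: "cnj (\<alpha> * ev i x + \<beta> * ev j x) = cnj \<alpha> * ev i x + cnj \<beta> * ev j x" for x
    by (simp add: ev_def)
  have "qfo I A (\<lambda>x. \<alpha> * ev i x + \<beta> * ev j x) =
        (\<Sum>a\<in>I. (\<Sum>b\<in>I. A a b * (\<alpha> * ev i b + \<beta> * ev j b)) * (cnj \<alpha> * ev i a + cnj \<beta> * ev j a))"
    unfolding qfo_def c by (simp add: sum_distrib_right mult.assoc)
  also have "\<dots> = (\<Sum>a\<in>I. (A a i * \<alpha> + A a j * \<beta>) * (cnj \<alpha> * ev i a + cnj \<beta> * ev j a))"
    using sum_ev2[OF assms] by simp
  also have "\<dots> = (A i i * \<alpha> + A i j * \<beta>) * cnj \<alpha> + (A j i * \<alpha> + A j j * \<beta>) * cnj \<beta>"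
    using sum_ev2[OF assms, of "\<lambda>a. A a i * \<alpha> + A a j * \<beta>"] by simp
  finally show ?thesis by (simp add: algebra_simps)
qed

lemma qfo_ev1:
  assumes "finite I" "i \<in> I"
  shows "qfo I A (\<lambda>x. \<alpha> * ev i x) = A i i * \<alpha> * cnj \<alpha>"
proof -
  have c: "cnj (\<alpha> * ev i x) = cnj \<alpha> * ev i x" for x
    by (simp add: ev_def)
  have "qfo I A (\<lambda>x. \<alpha> * ev i x) =
        (\<Sum>a\<in>I. (\<Sum>b\<in>I. A a b * (\<alpha> * ev i b)) * (cnj \<alpha> * ev i a))"
    unfolding qfo_def c by (simp add: sum_distrib_right mult.assoc)
  also have "\<dots> = (\<Sum>a\<in>I. (A a i * \<alpha>) * (cnj \<alpha> * ev i a))"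
    using sum_ev1[OF assms] by simp
  also have "\<dots> = (A i i * \<alpha>) * cnj \<alpha>"
    using sum_ev1[OF assms, of "\<lambda>a. A a i * \<alpha>"] by simp
  finally show ?thesis by (simp add: algebra_simps)
qed

lemma real_form_herm:
  assumes fin: "finite I" and r: "\<And>v. Im (qfo I A v) = 0"
  shows "herm_on I A"
  unfolding herm_on_def
proof (intro ballI)
  fix i j assume i: "i \<in> I" and j: "j \<in> I"
  have d: "Im (A x x) = 0" if "x \<in> I" for x
    using r[of "\<lambda>y. 1 * ev x y"] qfo_ev1[OF fin that, of A 1] by simp
  show "A j i = cnj (A i j)"
  proof (cases "i = j")
    case True thus ?thesis using d[OF i] by (simp add: complex_eq_iff)
  next
    case False
    have 1: "Im (A i j + A j i) = 0"
      using r[of "\<lambda>x. 1 * ev i x + 1 * ev j x"] qfo_ev2[OF fin i j False, of A 1 1] d[OF i] d[OF j]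
      by simp
    have 2: "Re (A i j) - Re (A j i) = 0"
      using r[of "\<lambda>x. 1 * ev i x + \<i> * ev j x"] qfo_ev2[OF fin i j False, of A 1 \<i>] d[OF i] d[OF j]
      by simp
    show ?thesis using 1 2 by (simp add: complex_eq_iff)
  qed
qed

lemma psd_on_herm: "finite I \<Longrightarrow> psd_on I A \<Longrightarrow> herm_on I A"
  using real_form_herm psd_on_qfo by blast

lemma L0lin: fixes a c :: real assumes "\<And>t. 0 \<le> c + t * a" shows "a = 0"
proof (rule ccontr)
  assume "a \<noteq> 0"
  then have "c + (-(\<bar>c\<bar>+1)/a) * a < 0" by simp
  with assms show False by (meson not_le)
qed

lemma L0quad: fixes a b :: real assumes "\<And>t. 0 \<le> t * a + t\<^sup>2 * b" shows "a = 0"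
proof (rule ccontr)
  assume a: "a \<noteq> 0"
  define B where "B = \<bar>b\<bar>"
  have B: "B \<ge> 0" unfolding B_def by simp
  define t where "t = - a / (B + 1)"
  have "t * a + t\<^sup>2 * b \<le> t * a + t\<^sup>2 * B"
    unfolding B_def by (simp add: mult_left_mono)
  also have "\<dots> = t * (a + t * B)" by (simp add: algebra_simps power2_eq_square)
  also have "a + t * B = a / (B + 1)" unfolding t_def using B by (simp add: field_simps)
  also have "t * (a / (B + 1)) = - (a / (B+1))\<^sup>2" unfolding t_def by (simp add: power2_eq_square)
  also have "\<dots> < 0" using a B by simp
  finally show False using assms[of t] by simp
qed

definition tr2 :: "'a set \<Rightarrow> ('a \<Rightarrow> 'a \<Rightarrow> complex) \<Rightarrow> ('a \<Rightarrow> 'a \<Rightarrow> complex) \<Rightarrow> complex" where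
  "tr2 I A B = (\<Sum>i\<in>I. \<Sum>j\<in>I. A i j * B j i)"

lemma qfo_insert:
  assumes "finite F" "x \<notin> F"
  shows "qfo (insert x F) A v = qfo F A v + A x x * v x * cnj (v x)
     + (\<Sum>j\<in>F. A x j * v j * cnj (v x)) + (\<Sum>i\<in>F. A i x * v x * cnj (v i))"
proof -
  have "qfo (insert x F) A v = (\<Sum>j\<in>insert x F. A x j * v j * cnj (v x)) + (\<Sum>i\<in>F. \<Sum>j\<in>insert x F. A i j * v j * cnj (v i))"
    unfolding qfo_def using assms by (simp add: sum.insert)
  also have "(\<Sum>j\<in>insert x F. A x j * v j * cnj (v x)) = A x x * v x * cnj (v x) + (\<Sum>j\<in>F. A x j * v j * cnj (v x))"
    using assms by (simp add: sum.insert)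
  also have "(\<Sum>i\<in>F. \<Sum>j\<in>insert x F. A i j * v j * cnj (v i)) = (\<Sum>i\<in>F. A i x * v x * cnj (v i) + (\<Sum>j\<in>F. A i j * v j * cnj (v i)))"
    using assms by (simp add: sum.insert)
  also have "\<dots> = (\<Sum>i\<in>F. A i x * v x * cnj (v i)) + qfo F A v"
    unfolding qfo_def by (simp add: sum.distrib)
  finally show ?thesis by simp
qed

lemma psd_on_restrict:
  assumes "finite F" "x \<notin> F" "psd_on (insert x F) A"
  shows "psd_on F A"
  unfolding psd_on_qfo
proof
  fix v
  define w where "w = (\<lambda>z. if z = x then (0::complex) else v z)"
  have "qfo (insert x F) A w = qfo F A w"
    using qfo_insert[OF assms(1,2)] by (simp add: w_def)
  also have "qfo F A w = qfo F A v"
    unfolding qfo_def w_def using assms(2) by (intro sum.cong refl) auto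
  finally show "Im (qfo F A v) = 0 \<and> 0 \<le> Re (qfo F A v)"
    using assms(3) unfolding psd_on_qfo by metis
qed

lemma psd_on_diag:
  assumes "finite I" "x \<in> I" "psd_on I A"
  shows "Im (A x x) = 0" "0 \<le> Re (A x x)"
  using assms(3)[unfolded psd_on_qfo, rule_format, of "\<lambda>z. 1 * ev x z"] qfo_ev1[OF assms(1,2), of A 1]
  by auto

lemma psd_on_zero_diag:
  assumes fin: "finite I" and x: "x \<in> I" and j: "j \<in> I" and p: "psd_on I A" and z: "A x x = 0"
  shows "A j x = 0" "A x j = 0"
proof -
  have h: "herm_on I A" using psd_on_herm[OF fin p] .
  have "A j x = 0"
  proof (cases "j = x")
    case True thus ?thesis using z by simp
  next
    case False
    hence xj: "x \<noteq> j" by simp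
    have hx: "A x j = cnj (A j x)" using h x j unfolding herm_on_def by blast
    have djj: "Im (A j j) = 0" "0 \<le> Re (A j j)" using psd_on_diag[OF fin j p] by auto
    have "2 * Re (A j x) = 0"
    proof (rule L0lin[of "Re (A j j)" "2 * Re (A j x)"])
      fix t :: real
      have "0 \<le> Re (qfo I A (\<lambda>z. of_real t * ev x z + 1 * ev j z))"
        using p unfolding psd_on_qfo by blast
      also have "qfo I A (\<lambda>z. of_real t * ev x z + 1 * ev j z) =
          A x x * of_real t * cnj (of_real t) + A j j * 1 * cnj 1 + A x j * 1 * cnj (of_real t) + A j x * of_real t * cnj 1"
        by (rule qfo_ev2[OF fin x j xj])
      finally show "0 \<le> Re (A j j) + t * (2 * Re (A j x))"
        using z hx by (simp add: algebra_simps)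
    qed
    moreover have "-2 * Im (A j x) = 0"
    proof (rule L0lin[of "Re (A j j)" "-2 * Im (A j x)"])
      fix t :: real
      have "0 \<le> Re (qfo I A (\<lambda>z. (\<i> * of_real t) * ev x z + 1 * ev j z))"
        using p unfolding psd_on_qfo by blast
      also have "qfo I A (\<lambda>z. (\<i> * of_real t) * ev x z + 1 * ev j z) =
          A x x * (\<i> * of_real t) * cnj (\<i> * of_real t) + A j j * 1 * cnj 1 + A x j * 1 * cnj (\<i> * of_real t) + A j x * (\<i> * of_real t) * cnj 1"
        by (rule qfo_ev2[OF fin x j xj])
      finally show "0 \<le> Re (A j j) + t * (-2 * Im (A j x))"
        using z hx by (simp add: algebra_simps)
    qed
    ultimately show ?thesis by (simp add: complex_eq_iff)
  qed
  moreover have "A x j = cnj (A j x)" using h x j unfolding herm_on_def by blast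
  ultimately show "A j x = 0" "A x j = 0" by auto
qed

lemma sum_ev_right: "finite I \<Longrightarrow> x \<in> I \<Longrightarrow> (\<Sum>j\<in>I. f j * ev x j) = f x"
  by (simp add: ev_def if_distrib sum.delta' cong: if_cong)

lemma qfo_add_ev:
  assumes fin: "finite I" and x: "x \<in> I"
  shows "qfo I A (\<lambda>z. v z + t * ev x z) = qfo I A v + t * (\<Sum>i\<in>I. A i x * cnj (v i))
     + cnj t * (\<Sum>j\<in>I. A x j * v j) + A x x * t * cnj t"
proof -
  have c: "cnj (v z + t * ev x z) = cnj (v z) + cnj t * ev x z" for z by (simp add: ev_def)
  have e1: "(\<Sum>i\<in>I. \<Sum>j\<in>I. A i j * v j * cnj (v i)) = qfo I A v" by (simp add: qfo_def)
  have e2: "(\<Sum>i\<in>I. \<Sum>j\<in>I. A i j * (t * ev x j) * cnj (v i)) = t * (\<Sum>i\<in>I. A i x * cnj (v i))"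
  proof -
    have "(\<Sum>i\<in>I. \<Sum>j\<in>I. A i j * (t * ev x j) * cnj (v i)) = (\<Sum>i\<in>I. (\<Sum>j\<in>I. (A i j * t * cnj (v i)) * ev x j))"
      by (simp add: algebra_simps)
    also have "\<dots> = (\<Sum>i\<in>I. A i x * t * cnj (v i))" using sum_ev_right[OF fin x] by simp
    finally show ?thesis by (simp add: sum_distrib_left algebra_simps)
  qed
  have e3: "(\<Sum>i\<in>I. \<Sum>j\<in>I. A i j * v j * (cnj t * ev x i)) = cnj t * (\<Sum>j\<in>I. A x j * v j)"
  proof -
    have "(\<Sum>i\<in>I. \<Sum>j\<in>I. A i j * v j * (cnj t * ev x i)) = (\<Sum>i\<in>I. (\<Sum>j\<in>I. A i j * v j * cnj t) * ev x i)"
      by (intro sum.cong refl) (simp add: sum_distrib_right sum_distrib_left mult_ac)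
    also have "\<dots> = (\<Sum>j\<in>I. A x j * v j * cnj t)" using sum_ev_right[OF fin x] by simp
    finally show ?thesis by (simp add: sum_distrib_left algebra_simps)
  qed
  have e4: "(\<Sum>i\<in>I. \<Sum>j\<in>I. A i j * (t * ev x j) * (cnj t * ev x i)) = A x x * t * cnj t"
  proof -
    have "(\<Sum>i\<in>I. \<Sum>j\<in>I. A i j * (t * ev x j) * (cnj t * ev x i)) = (\<Sum>i\<in>I. (\<Sum>j\<in>I. (A i j * t * cnj t) * ev x j) * ev x i)"
      by (intro sum.cong refl) (simp add: sum_distrib_right sum_distrib_left mult_ac)
    also have "\<dots> = (\<Sum>i\<in>I. (A i x * t * cnj t) * ev x i)" using sum_ev_right[OF fin x] by simp
    also have "\<dots> = A x x * t * cnj t" using sum_ev_right[OF fin x] by simp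
    finally show ?thesis .
  qed
  have "qfo I A (\<lambda>z. v z + t * ev x z) = (\<Sum>i\<in>I. \<Sum>j\<in>I. A i j * v j * cnj (v i)) +
      (\<Sum>i\<in>I. \<Sum>j\<in>I. A i j * (t * ev x j) * cnj (v i)) + (\<Sum>i\<in>I. \<Sum>j\<in>I. A i j * v j * (cnj t * ev x i))
      + (\<Sum>i\<in>I. \<Sum>j\<in>I. A i j * (t * ev x j) * (cnj t * ev x i))"
    unfolding qfo_def c by (simp add: sum.distrib[symmetric] algebra_simps)
  then show ?thesis using e1 e2 e3 e4 by simp
qed

lemma tr2_insert_zero:
  assumes "finite F" "x \<notin> F" "\<And>j. A x j = 0" "\<And>i. A i x = 0"
  shows "tr2 (insert x F) A B = tr2 F A B"
proof -
  have "tr2 (insert x F) A B = (\<Sum>j\<in>insert x F. A x j * B j x) + (\<Sum>i\<in>F. \<Sum>j\<in>insert x F. A i j * B j i)"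
    unfolding tr2_def using assms(1,2) by (simp add: sum.insert)
  also have "\<dots> = (\<Sum>i\<in>F. \<Sum>j\<in>F. A i j * B j i)"
    using assms by (simp add: sum.insert)
  finally show ?thesis unfolding tr2_def .
qed

lemma trace_psd:
  assumes "finite I"
  shows "psd_on I A \<Longrightarrow> psd_on I B \<Longrightarrow> Im (tr2 I A B) = 0 \<and> 0 \<le> Re (tr2 I A B)"
  using assms
proof (induction I arbitrary: A B rule: finite_induct)
  case empty
  then show ?case by (simp add: tr2_def)
next
  case (insert x F)
  let ?I = "insert x F"
  have fI: "finite ?I" using insert by simp
  have xI: "x \<in> ?I" by simp
  have pB: "psd_on F B" using psd_on_restrict[OF insert(1,2) insert(5)] .
  have hA: "herm_on ?I A" using psd_on_herm[OF fI insert(4)] .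
  have hB: "herm_on ?I B" using psd_on_herm[OF fI insert(5)] .
  have dA: "Im (A x x) = 0" "0 \<le> Re (A x x)" using psd_on_diag[OF fI xI insert(4)] by auto
  show ?case
  proof (cases "A x x = 0")
    case True
    have z1: "A x j = 0" if "j \<in> ?I" for j using psd_on_zero_diag[OF fI xI that insert(4) True] by simp
    have z2: "A j x = 0" if "j \<in> ?I" for j using psd_on_zero_diag[OF fI xI that insert(4) True] by simp
    have "tr2 ?I A B = tr2 F A B"
      using insert(1,2) z1 z2 unfolding tr2_def by (simp add: sum.distrib)
    moreover have "Im (tr2 F A B) = 0 \<and> 0 \<le> Re (tr2 F A B)"
      using insert.IH[OF psd_on_restrict[OF insert(1,2,4)] pB] .
    ultimately show ?thesis by simp
  next
    case False
    define a where "a = A x x"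
    have a: "a = of_real (Re a)" "Re a > 0" using dA False unfolding a_def
      by (auto simp: complex_eq_iff)
    define r where "r = Re a"
    have ar: "a = of_real r" "r > 0" using a unfolding r_def by auto
    define A' where "A' = (\<lambda>i j. A i j - A i x * A x j / a)"
    have A'x1: "A' x j = 0" for j using False unfolding A'_def a_def by simp
    have A'x2: "A' i x = 0" for i using False unfolding A'_def a_def by simp
    have hAx: "A i x = cnj (A x i)" if "i \<in> ?I" for i using hA that xI unfolding herm_on_def by blast
    have cnjsum: "(\<Sum>i\<in>?I. A i x * cnj (v i)) = cnj (\<Sum>j\<in>?I. A x j * v j)" for v
      unfolding cnj_sum by (rule sum.cong[OF refl]) (simp add: hAx)
    have qA': "qfo ?I A' v = qfo ?I A (\<lambda>z. v z + (- (\<Sum>j\<in>?I. A x j * v j) / a) * ev x z)" for v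
    proof -
      define g where "g = (\<Sum>j\<in>?I. A x j * v j)"
      have "qfo ?I A' v = qfo ?I A v - (\<Sum>i\<in>?I. \<Sum>j\<in>?I. A i x * cnj (v i) * (A x j * v j)) / a"
      proof -
        have "qfo ?I A' v = (\<Sum>i\<in>?I. \<Sum>j\<in>?I. A i j * v j * cnj (v i) - A i x * cnj (v i) * (A x j * v j) / a)"
          unfolding qfo_def A'_def by (intro sum.cong refl) (simp add: diff_divide_distrib ring_distribs mult_ac)
        then show ?thesis unfolding qfo_def by (simp only: sum_subtractf sum_divide_distrib)
      qed
      also have "(\<Sum>i\<in>?I. \<Sum>j\<in>?I. A i x * cnj (v i) * (A x j * v j)) = cnj g * g"
        unfolding g_def cnjsum[symmetric] by (simp add: sum_product)
      finally have 1: "qfo ?I A' v = qfo ?I A v - cnj g * g / a" .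
      have 2: "qfo ?I A (\<lambda>z. v z + (- g / a) * ev x z) = qfo ?I A v - cnj g * g / a"
      proof -
        have e: "qfo ?I A (\<lambda>z. v z + (- g / a) * ev x z) = qfo ?I A v + (- g / a) * cnj g + cnj (- g / a) * g + a * (- g / a) * cnj (- g / a)"
          unfolding qfo_add_ev[OF fI xI] cnjsum g_def[symmetric] a_def[symmetric] by simp
        have c: "cnj (- g / complex_of_real r) = - cnj g / complex_of_real r" by simp
        have "qfo ?I A v + (- g / a) * cnj g + cnj (- g / a) * g + a * (- g / a) * cnj (- g / a) = qfo ?I A v - cnj g * g / a"
          unfolding ar(1) c using ar(2) by (simp add: field_simps)
        then show ?thesis by (rule trans[OF e])
      qed
      show ?thesis using 1 2 g_def by simp
    qed
    have pA': "psd_on ?I A'"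
      unfolding psd_on_qfo qA' using insert(4) unfolding psd_on_qfo by blast
    have "tr2 ?I A B = tr2 ?I A' B + (\<Sum>i\<in>?I. \<Sum>j\<in>?I. A i x * A x j * B j i) / a"
    proof -
      have "tr2 ?I A' B = (\<Sum>i\<in>?I. \<Sum>j\<in>?I. A i j * B j i - A i x * A x j * B j i / a)"
        unfolding tr2_def A'_def by (intro sum.cong refl) (simp add: diff_divide_distrib ring_distribs mult_ac)
      then show ?thesis unfolding tr2_def by (simp only: sum_subtractf sum_divide_distrib) simp
    qed
    also have "(\<Sum>i\<in>?I. \<Sum>j\<in>?I. A i x * A x j * B j i) = qfo ?I B (\<lambda>i. A i x)"
    proof -
      have "(\<Sum>i\<in>?I. \<Sum>j\<in>?I. A i x * A x j * B j i) = (\<Sum>j\<in>?I. \<Sum>i\<in>?I. A i x * A x j * B j i)"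
        by (rule sum.swap)
      also have "\<dots> = qfo ?I B (\<lambda>i. A i x)"
        unfolding qfo_def
        by (intro sum.cong refl) (simp add: hAx mult_ac)
      finally show ?thesis .
    qed
    also have "tr2 ?I A' B = tr2 F A' B" by (rule tr2_insert_zero[OF insert(1,2)]) (simp_all add: A'x1 A'x2)
    finally have eq: "tr2 ?I A B = tr2 F A' B + qfo ?I B (\<lambda>i. A i x) / a" .
    have IH: "Im (tr2 F A' B) = 0 \<and> 0 \<le> Re (tr2 F A' B)"
      using insert.IH[OF psd_on_restrict[OF insert(1,2) pA'] pB] .
    have qB: "Im (qfo ?I B (\<lambda>i. A i x)) = 0" "0 \<le> Re (qfo ?I B (\<lambda>i. A i x))"
      using insert(5) unfolding psd_on_qfo by auto
    have "Im (qfo ?I B (\<lambda>i. A i x) / a) = 0 \<and> 0 \<le> Re (qfo ?I B (\<lambda>i. A i x) / a)"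
      unfolding ar(1) using qB ar(2) by (simp add: Im_divide_of_real Re_divide_of_real)
    then show ?thesis using eq IH by simp
  qed
qed

definition herm :: "('a \<Rightarrow> 'a \<Rightarrow> complex) \<Rightarrow> bool" where
  "herm A \<longleftrightarrow> (\<forall>i j. A j i = cnj (A i j))"

lemma herm_on_UNIV: "herm_on UNIV A \<longleftrightarrow> herm A"
  unfolding herm_on_def herm_def by simp

lemma cinner_cnj: "cnj (cinner u w) = cinner w u"
  unfolding cinner_def by (simp add: mult.commute)

lemma cinner_add_left: "cinner (\<lambda>i. u i + w i) z = cinner u z + cinner w z"
  unfolding cinner_def by (simp add: ring_distribs sum.distrib)

lemma cinner_add_right: "cinner z (\<lambda>i. u i + w i) = cinner z u + cinner z w"
  unfolding cinner_def by (simp add: ring_distribs sum.distrib)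

lemma cinner_diff_left: "cinner (\<lambda>i. u i - w i) z = cinner u z - cinner w z"
  unfolding cinner_def by (simp add: ring_distribs sum_subtractf)

lemma cinner_diff_right: "cinner z (\<lambda>i. u i - w i) = cinner z u - cinner z w"
  unfolding cinner_def by (simp add: ring_distribs sum_subtractf)

lemma cinner_scale_left: "cinner (\<lambda>i. c * u i) z = c * cinner u z"
  unfolding cinner_def by (simp add: sum_distrib_left mult.assoc)

lemma cinner_scale_right: "cinner z (\<lambda>i. c * u i) = cnj c * cinner z u"
  unfolding cinner_def by (simp add: sum_distrib_left mult_ac)

lemma cinner_zero_left: "cinner (\<lambda>i. 0) z = 0"
  unfolding cinner_def by simp

lemma cinner_self: "cinner u u = of_real (\<Sum>i\<in>UNIV. (cmod (u i))\<^sup>2)"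
  unfolding cinner_def of_real_sum by (rule sum.cong[OF refl]) (simp add: complex_norm_square[symmetric])

lemma cinner_self_Re: "Re (cinner u u) = (\<Sum>i\<in>UNIV. (cmod (u i))\<^sup>2)" "Im (cinner u u) = 0"
  unfolding cinner_self by simp_all

lemma cinner_self_nonneg: "0 \<le> Re (cinner u u)"
  unfolding cinner_self_Re by (simp add: sum_nonneg)

lemma cinner_self_eq0:
  fixes u :: "'a::finite \<Rightarrow> complex"
  shows "cinner u u = 0 \<longleftrightarrow> u = (\<lambda>i. 0)"
proof
  assume "cinner u u = 0"
  then have "(\<Sum>i\<in>UNIV. (cmod (u i))\<^sup>2) = 0" unfolding cinner_self by (metis of_real_eq_0_iff)
  then have "\<forall>i\<in>UNIV. (cmod (u i))\<^sup>2 = 0" by (subst (asm) sum_nonneg_eq_0_iff) auto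
  then show "u = (\<lambda>i. 0)" by auto
qed (simp add: cinner_def)

lemma vnorm_cinner: "vnorm u = sqrt (Re (cinner u u))"
  unfolding vnorm_def cinner_self_Re ..

lemma mat_vec_herm:
  assumes "herm C"
  shows "cinner (mat_vec C u) w = cinner u (mat_vec C w)"
proof -
  have "cinner (mat_vec C u) w = (\<Sum>i\<in>UNIV. \<Sum>j\<in>UNIV. C i j * u j * cnj (w i))"
    unfolding cinner_def mat_vec_def by (simp add: sum_distrib_right)
  also have "\<dots> = (\<Sum>j\<in>UNIV. \<Sum>i\<in>UNIV. C i j * u j * cnj (w i))" by (rule sum.swap)
  also have "\<dots> = cinner u (mat_vec C w)"
  proof -
    have hc: "cnj (C j i) = C i j" for i j using assms unfolding herm_def by (metis complex_cnj_cnj)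
    show ?thesis unfolding cinner_def mat_vec_def
      by (simp add: hc sum_distrib_left mult_ac)
  qed
  finally show ?thesis .
qed

lemma mat_vec_add: "mat_vec C (\<lambda>i. u i + w i) = (\<lambda>i. mat_vec C u i + mat_vec C w i)"
  unfolding mat_vec_def by (simp add: ring_distribs sum.distrib)

lemma mat_vec_scale: "mat_vec C (\<lambda>i. c * u i) = (\<lambda>i. c * mat_vec C u i)"
  unfolding mat_vec_def by (simp add: sum_distrib_left mult_ac)

lemma qf_real_herm:
  assumes "herm C" shows "Im (cinner (mat_vec C u) u) = 0"
proof -
  have "cnj (cinner (mat_vec C u) u) = cinner (mat_vec C u) u"
    unfolding cinner_cnj mat_vec_herm[OF assms] ..
  then show ?thesis by (metis Reals_cnj_iff complex_is_Real_iff)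
qed

lemma qf_add:
  assumes "herm C"
  shows "cinner (mat_vec C (\<lambda>i. x i + w i)) (\<lambda>i. x i + w i) =
     cinner (mat_vec C x) x + cinner (mat_vec C x) w + cnj (cinner (mat_vec C x) w) + cinner (mat_vec C w) w"
proof -
  have "cnj (cinner (mat_vec C x) w) = cinner (mat_vec C w) x"
    unfolding cinner_cnj mat_vec_herm[OF assms] ..
  then show ?thesis unfolding mat_vec_add cinner_add_left cinner_add_right by simp
qed

lemma qf_scale: "cinner (mat_vec C (\<lambda>i. c * u i)) (\<lambda>i. c * u i) = c * cnj c * cinner (mat_vec C u) u"
  unfolding mat_vec_scale cinner_scale_left cinner_scale_right by simp


lemma cinner_sum_right: "cinner z (\<lambda>j. \<Sum>k\<in>K. c k * w k j) = (\<Sum>k\<in>K. cnj (c k) * cinner z (w k))"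
  unfolding cinner_def by (simp add: sum_distrib_left sum_distrib_right mult_ac cnj_sum) (rule sum.swap)

lemma cinner_sum_left: "cinner (\<lambda>j. \<Sum>k\<in>K. c k * w k j) z = (\<Sum>k\<in>K. c k * cinner (w k) z)"
  unfolding cinner_def by (simp add: sum_distrib_left sum_distrib_right mult_ac) (rule sum.swap)

definition orthonormal :: "(nat \<Rightarrow> 'a::finite \<Rightarrow> complex) \<Rightarrow> nat \<Rightarrow> bool" where
  "orthonormal v m \<longleftrightarrow> (\<forall>k<m. \<forall>l<m. cinner (v k) (v l) = (if k = l then 1 else 0))"

definition projc :: "(nat \<Rightarrow> 'a \<Rightarrow> complex) \<Rightarrow> nat \<Rightarrow> 'a \<Rightarrow> 'a \<Rightarrow> complex" where
  "projc v m i j = ev j i - (\<Sum>k<m. cnj (v k j) * v k i)"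

lemma cinner_ev_right: "cinner z (ev i) = z i"
  unfolding cinner_def ev_def by (simp add: if_distrib sum.delta cong: if_cong)

lemma projc_orth:
  assumes "orthonormal v m" "l < m"
  shows "cinner (\<lambda>j. projc v m j i) (v l) = 0"
proof -
  have "cinner (\<lambda>j. projc v m j i) (v l) = cinner (ev i) (v l) - (\<Sum>k<m. cnj (v k i) * cinner (v k) (v l))"
    unfolding projc_def cinner_diff_left cinner_sum_left ..
  also have "(\<Sum>k<m. cnj (v k i) * cinner (v k) (v l)) = (\<Sum>k<m. if k = l then cnj (v l i) else 0)"
    using assms unfolding orthonormal_def by (intro sum.cong refl) auto
  also have "\<dots> = cnj (v l i)" using assms(2) by simp
  also have "cinner (ev i) (v l) = cnj (v l i)"
    by (metis cinner_cnj cinner_ev_right)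
  finally show ?thesis by simp
qed

lemma projc_col_self:
  assumes "orthonormal v m"
  shows "cinner (\<lambda>j. projc v m j i) (\<lambda>j. projc v m j i) = projc v m i i"
proof -
  have "cinner (\<lambda>j. projc v m j i) (\<lambda>j. projc v m j i) =
     cinner (\<lambda>j. projc v m j i) (ev i) - (\<Sum>k<m. cnj (cnj (v k i)) * cinner (\<lambda>j. projc v m j i) (v k))"
    unfolding projc_def[of v m _ i] cinner_diff_right cinner_sum_right ..
  also have "(\<Sum>k<m. cnj (cnj (v k i)) * cinner (\<lambda>j. projc v m j i) (v k)) = 0"
    using projc_orth[OF assms] by simp
  finally show ?thesis by (simp add: cinner_ev_right)
qed

lemma projc_trace:
  fixes v :: "nat \<Rightarrow> 'a::finite \<Rightarrow> complex"
  assumes "orthonormal v m"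
  shows "(\<Sum>i\<in>UNIV. projc v m i i) = of_nat CARD('a) - of_nat m"
proof -
  have "(\<Sum>i\<in>UNIV. projc v m i i) = (\<Sum>i\<in>(UNIV::'a set). 1) - (\<Sum>i\<in>UNIV. \<Sum>k<m. v k i * cnj (v k i))"
    unfolding projc_def ev_def by (simp add: sum_subtractf mult.commute)
  also have "(\<Sum>i\<in>UNIV. \<Sum>k<m. v k i * cnj (v k i)) = (\<Sum>k<m. cinner (v k) (v k))"
    unfolding cinner_def by (rule sum.swap)
  also have "\<dots> = (\<Sum>k<m. 1)" using assms unfolding orthonormal_def by (intro sum.cong refl) auto
  finally show ?thesis by simp
qed

lemma ex_orth_unit:
  fixes v :: "nat \<Rightarrow> 'a::finite \<Rightarrow> complex"
  assumes on: "orthonormal v m" and lt: "m < CARD('a)"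
  shows "\<exists>u. cinner u u = 1 \<and> (\<forall>k<m. cinner u (v k) = 0)"
proof -
  have "(\<Sum>i\<in>UNIV. projc v m i i) \<noteq> 0" unfolding projc_trace[OF on] using lt by simp
  then obtain i where i: "projc v m i i \<noteq> 0" by (meson sum.neutral)
  define c where "c = (\<lambda>j. projc v m j i)"
  have cc: "cinner c c = projc v m i i" unfolding c_def by (rule projc_col_self[OF on])
  define r where "r = Re (cinner c c)"
  have r: "cinner c c = of_real r" "r > 0"
    using cinner_self_Re[of c] cinner_self_nonneg[of c] i cc unfolding r_def
    by (auto simp: complex_eq_iff)
  define u where "u = (\<lambda>j. of_real (1 / sqrt r) * c j)"
  have "cinner u u = 1" unfolding u_def cinner_scale_left cinner_scale_right r(1)
    using r(2) by (simp flip: of_real_mult)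
  moreover have "cinner u (v k) = 0" if "k < m" for k
    unfolding u_def cinner_scale_left c_def using projc_orth[OF on that] by simp
  ultimately show ?thesis by blast
qed

lemma orth_complete:
  fixes v :: "nat \<Rightarrow> 'a::finite \<Rightarrow> complex"
  assumes on: "orthonormal v CARD('a)"
  shows "(\<Sum>k<CARD('a). cnj (v k j) * v k i) = ev j i"
proof -
  let ?n = "CARD('a)"
  have "(\<Sum>i\<in>UNIV. Re (cinner (\<lambda>j. projc v ?n j i) (\<lambda>j. projc v ?n j i))) = 0"
    using arg_cong[OF projc_trace[OF on], of Re] unfolding projc_col_self[OF on] by simp
  then have "\<forall>i\<in>UNIV. Re (cinner (\<lambda>j. projc v ?n j i) (\<lambda>j. projc v ?n j i)) = 0"
    by (subst (asm) sum_nonneg_eq_0_iff) (auto simp: cinner_self_nonneg)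
  then have "cinner (\<lambda>j. projc v ?n j i') (\<lambda>j. projc v ?n j i') = 0" for i'
    using cinner_self_Re(2) by (simp add: complex_eq_iff)
  then have "(\<lambda>j. projc v ?n j i') = (\<lambda>j. 0)" for i' using cinner_self_eq0 by blast
  then have "projc v ?n i j = 0" by metis
  then show ?thesis unfolding projc_def by simp
qed

lemma exists_max:
  fixes C :: "'a::finite \<Rightarrow> 'a \<Rightarrow> complex" and v :: "nat \<Rightarrow> 'a \<Rightarrow> complex"
  assumes ne: "\<exists>u. cinner u u = 1 \<and> (\<forall>k<m. cinner u (v k) = 0)"
  shows "\<exists>x. (cinner x x = 1 \<and> (\<forall>k<m. cinner x (v k) = 0)) \<and>
     (\<forall>y. cinner y y = 1 \<and> (\<forall>k<m. cinner y (v k) = 0) \<longrightarrow>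
          Re (cinner (mat_vec C y) y) \<le> Re (cinner (mat_vec C x) x))"
proof -
  define S where "S = {z :: complex^'a. cinner (vec_nth z) (vec_nth z) = 1} \<inter>
     (\<Inter>k\<in>{..<m}. {z. cinner (vec_nth z) (v k) = 0})"
  have vl: "vec_nth (vec_lambda y) = y" for y :: "'a \<Rightarrow> complex" by (rule ext) simp
  have memS: "z \<in> S \<longleftrightarrow> cinner (vec_nth z) (vec_nth z) = 1 \<and> (\<forall>k<m. cinner (vec_nth z) (v k) = 0)" for z
    unfolding S_def by auto
  have c1: "continuous_on UNIV (\<lambda>z::complex^'a. cinner (vec_nth z) (vec_nth z))"
    unfolding cinner_def by (intro continuous_intros continuous_on_component continuous_on_id)
  have c2: "continuous_on UNIV (\<lambda>z::complex^'a. cinner (vec_nth z) (v k))" for k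
    unfolding cinner_def by (intro continuous_intros continuous_on_component continuous_on_id)
  have closed: "closed S" unfolding S_def
    by (intro closed_Int closed_INT ballI closed_Collect_eq c1 c2 continuous_on_const)
  have nrm: "norm z = sqrt (Re (cinner (vec_nth z) (vec_nth z)))" for z :: "complex^'a"
    unfolding norm_vec_def L2_set_def cinner_self_Re ..
  have bounded: "bounded S"
    unfolding bounded_iff by (rule exI[of _ 1]) (auto simp: memS nrm)
  have compact: "compact S" using closed bounded by (simp add: compact_eq_bounded_closed)
  from ne obtain u where u: "cinner u u = 1 \<and> (\<forall>k<m. cinner u (v k) = 0)" by blast
  have "vec_lambda u \<in> S" using u by (simp add: memS vl)
  then have Sne: "S \<noteq> {}" by blast
  have cf: "continuous_on S (\<lambda>z::complex^'a. Re (cinner (mat_vec C (vec_nth z)) (vec_nth z)))"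
    unfolding cinner_def mat_vec_def by (intro continuous_intros continuous_on_component continuous_on_id)
  obtain z where z: "z \<in> S" and zmax: "\<forall>y\<in>S. Re (cinner (mat_vec C (vec_nth y)) (vec_nth y)) \<le> Re (cinner (mat_vec C (vec_nth z)) (vec_nth z))"
    using continuous_attains_sup[OF compact Sne cf] by blast
  have a: "cinner (vec_nth z) (vec_nth z) = 1 \<and> (\<forall>k<m. cinner (vec_nth z) (v k) = 0)" using z memS by auto
  have b: "Re (cinner (mat_vec C y) y) \<le> Re (cinner (mat_vec C (vec_nth z)) (vec_nth z))"
    if "cinner y y = 1 \<and> (\<forall>k<m. cinner y (v k) = 0)" for y
  proof -
    have "vec_lambda y \<in> S" using that by (simp add: memS vl)
    then show ?thesis using zmax vl by metis
  qed
  show ?thesis using a b by blast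
qed

lemma max_eigen:
  fixes C :: "'a::finite \<Rightarrow> 'a \<Rightarrow> complex" and v :: "nat \<Rightarrow> 'a \<Rightarrow> complex"
  assumes herm: "herm C"
    and ev: "\<forall>k<m. mat_vec C (v k) = (\<lambda>i. of_real (lam k) * v k i)"
    and x1: "cinner x x = 1" and xo: "\<forall>k<m. cinner x (v k) = 0"
    and xmax: "\<forall>y. cinner y y = 1 \<and> (\<forall>k<m. cinner y (v k) = 0) \<longrightarrow>
          Re (cinner (mat_vec C y) y) \<le> Re (cinner (mat_vec C x) x)"
  shows "mat_vec C x = (\<lambda>i. cinner (mat_vec C x) x * x i)"
proof -
  define M where "M = Re (cinner (mat_vec C x) x)"
  have sc: "Re (cinner (mat_vec C y) y) \<le> M * Re (cinner y y)" if yo: "\<forall>k<m. cinner y (v k) = 0" for y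
  proof (cases "y = (\<lambda>i. 0)")
    case True
    then show ?thesis by (simp add: cinner_def mat_vec_def)
  next
    case False
    define r where "r = Re (cinner y y)"
    have r: "cinner y y = of_real r" "r > 0"
      using cinner_self_Re[of y] cinner_self_nonneg[of y] False cinner_self_eq0[of y] unfolding r_def
      by (auto simp: complex_eq_iff)
    define y' where "y' = (\<lambda>i. of_real (1 / sqrt r) * y i)"
    have "cinner y' y' = 1" unfolding y'_def cinner_scale_left cinner_scale_right r(1)
      using r(2) by (simp flip: of_real_mult)
    moreover have "\<forall>k<m. cinner y' (v k) = 0" unfolding y'_def cinner_scale_left using yo by simp
    ultimately have "Re (cinner (mat_vec C y') y') \<le> M" using xmax unfolding M_def by blast
    moreover have "cinner (mat_vec C y') y' = of_real (1 / r) * cinner (mat_vec C y) y"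
      unfolding y'_def qf_scale using r(2) by (simp flip: of_real_mult)
    ultimately have "Re (cinner (mat_vec C y) y) / r \<le> M" by simp
    then show ?thesis using r(2) unfolding r_def[symmetric] by (simp add: field_simps)
  qed
  have A: "Re (cinner (mat_vec C x) w) = 0" if wx: "cinner w x = 0" and wo: "\<forall>k<m. cinner w (v k) = 0" for w
  proof -
    define a where "a = cinner (mat_vec C x) w"
    have xw: "cinner x w = 0" using wx cinner_cnj[of w x] by simp
    have "0 \<le> t * (- 2 * Re a) + t\<^sup>2 * (M * Re (cinner w w) - Re (cinner (mat_vec C w) w))" for t :: real
    proof -
      define y where "y = (\<lambda>i. x i + of_real t * w i)"
      have yo: "\<forall>k<m. cinner y (v k) = 0" unfolding y_def cinner_add_left cinner_scale_left using xo wo by simp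
      have yy: "cinner y y = 1 + of_real (t * t) * cinner w w"
        unfolding y_def cinner_add_left cinner_add_right cinner_scale_left cinner_scale_right x1 xw wx
        by simp
      have qy: "cinner (mat_vec C y) y = cinner (mat_vec C x) x + of_real t * a + cnj (of_real t * a) + of_real (t * t) * cinner (mat_vec C w) w"
        unfolding y_def qf_add[OF herm] qf_scale mat_vec_scale cinner_scale_right a_def by (simp add: cinner_scale_left)
      have "Re (cinner (mat_vec C y) y) \<le> M * Re (cinner y y)" using sc[OF yo] .
      then have "M + 2 * t * Re a + t * t * Re (cinner (mat_vec C w) w) \<le> M * (1 + t * t * Re (cinner w w))"
        unfolding qy yy M_def by simp
      then show ?thesis by (simp add: algebra_simps power2_eq_square)
    qed
    then have "- 2 * Re a = 0" by (rule L0quad)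
    then show ?thesis unfolding a_def by simp
  qed
  have AB: "cinner (mat_vec C x) w = 0" if wx: "cinner w x = 0" and wo: "\<forall>k<m. cinner w (v k) = 0" for w
  proof -
    have 1: "Re (cinner (mat_vec C x) w) = 0" using A[OF wx wo] .
    have "Re (cinner (mat_vec C x) (\<lambda>i. \<i> * w i)) = 0"
      using wx wo by (intro A) (simp_all add: cinner_scale_left)
    then have 2: "Im (cinner (mat_vec C x) w) = 0" unfolding cinner_scale_right by simp
    show ?thesis using 1 2 by (simp add: complex_eq_iff)
  qed
  define \<mu> where "\<mu> = cinner (mat_vec C x) x"
  define r where "r = (\<lambda>i. mat_vec C x i - \<mu> * x i)"
  have Cxv: "cinner (mat_vec C x) (v k) = 0" if "k < m" for k
    unfolding mat_vec_herm[OF herm] using ev that xo by (simp add: cinner_scale_right)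
  have rx: "cinner r x = 0" unfolding r_def cinner_diff_left cinner_scale_left x1 \<mu>_def by simp
  have ro: "\<forall>k<m. cinner r (v k) = 0" unfolding r_def cinner_diff_left cinner_scale_left using xo Cxv by simp
  have "cinner (mat_vec C x) r = 0" by (rule AB[OF rx ro])
  then have "cinner r r = 0" unfolding r_def[of] cinner_diff_left cinner_scale_left
    using rx cinner_cnj[of r x] by (simp add: r_def[symmetric])
  then have "r = (\<lambda>i. 0)" using cinner_self_eq0 by blast
  then show ?thesis unfolding \<mu>_def[symmetric] r_def by (metis eq_iff_diff_eq_0)
qed


lemma spectral_family:
  fixes C :: "'a::finite \<Rightarrow> 'a \<Rightarrow> complex"
  assumes herm: "herm C"
  shows "m \<le> CARD('a) \<Longrightarrow> \<exists>v lam. orthonormal v m \<and> (\<forall>k<m. mat_vec C (v k) = (\<lambda>i. of_real (lam k) * v k i))"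
proof (induction m)
  case 0
  then show ?case by (auto simp: orthonormal_def)
next
  case (Suc m)
  then obtain v lam where on: "orthonormal v m" and ev: "\<forall>k<m. mat_vec C (v k) = (\<lambda>i. of_real (lam k) * v k i)"
    by auto
  have lt: "m < CARD('a)" using Suc by simp
  obtain x where xT: "cinner x x = 1 \<and> (\<forall>k<m. cinner x (v k) = 0)"
    and xmax: "\<forall>y. cinner y y = 1 \<and> (\<forall>k<m. cinner y (v k) = 0) \<longrightarrow>
          Re (cinner (mat_vec C y) y) \<le> Re (cinner (mat_vec C x) x)"
    using exists_max[OF ex_orth_unit[OF on lt], of C] by blast
  have eig: "mat_vec C x = (\<lambda>i. cinner (mat_vec C x) x * x i)"
    using max_eigen[OF herm ev _ _ xmax] xT by blast
  define \<mu> where "\<mu> = Re (cinner (mat_vec C x) x)"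
  have mu: "cinner (mat_vec C x) x = of_real \<mu>" unfolding \<mu>_def using qf_real_herm[OF herm, of x]
    by (simp add: complex_eq_iff)
  define v' where "v' = v(m := x)"
  define lam' where "lam' = lam(m := \<mu>)"
  have "orthonormal v' (Suc m)"
    unfolding orthonormal_def
  proof (intro allI impI)
    fix k l assume k: "k < Suc m" and l: "l < Suc m"
    show "cinner (v' k) (v' l) = (if k = l then 1 else 0)"
    proof (cases "k = m"; cases "l = m")
      assume "k = m" "l = m" then show ?thesis using xT by (simp add: v'_def)
    next
      assume "k = m" "l \<noteq> m" then show ?thesis using xT l by (simp add: v'_def)
    next
      assume "k \<noteq> m" "l = m" then show ?thesis using xT k cinner_cnj[of x "v k"] by (simp add: v'_def)
    next
      assume "k \<noteq> m" "l \<noteq> m" then show ?thesis using on k l by (simp add: v'_def orthonormal_def)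
    qed
  qed
  moreover have "\<forall>k<Suc m. mat_vec C (v' k) = (\<lambda>i. of_real (lam' k) * v' k i)"
    using ev eig mu by (auto simp: v'_def lam'_def less_Suc_eq)
  ultimately show ?case by blast
qed

lemma spectral_decomp:
  fixes C :: "'a::finite \<Rightarrow> 'a \<Rightarrow> complex"
  assumes herm: "herm C"
  shows "\<exists>v lam. orthonormal v CARD('a) \<and> C = (\<lambda>i j. \<Sum>k<CARD('a). of_real (lam k) * v k i * cnj (v k j))"
proof -
  obtain v lam where on: "orthonormal v CARD('a)"
    and ev: "\<forall>k<CARD('a). mat_vec C (v k) = (\<lambda>i. of_real (lam k) * v k i)"
    using spectral_family[OF herm, of "CARD('a)"] by auto
  have "C i j = (\<Sum>k<CARD('a). of_real (lam k) * v k i * cnj (v k j))" for i j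
  proof -
    have "C i j = (\<Sum>l\<in>UNIV. C i l * ev j l)" unfolding ev_def by (simp add: if_distrib sum.delta' cong: if_cong)
    also have "\<dots> = (\<Sum>l\<in>UNIV. C i l * (\<Sum>k<CARD('a). cnj (v k j) * v k l))"
      using orth_complete[OF on] by simp
    also have "\<dots> = (\<Sum>k<CARD('a). cnj (v k j) * mat_vec C (v k) i)"
      unfolding mat_vec_def by (simp add: sum_distrib_left mult_ac) (rule sum.swap)
    also have "\<dots> = (\<Sum>k<CARD('a). of_real (lam k) * v k i * cnj (v k j))"
      using ev by (intro sum.cong refl) simp
    finally show ?thesis .
  qed
  then show ?thesis using on by blast
qed

lemma mat_vec_rank:
  "mat_vec (\<lambda>i j. \<Sum>k<n. c k * v k i * cnj (v k j)) u = (\<lambda>i. \<Sum>k<n. (c k * cinner u (v k)) * v k i)"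
  unfolding mat_vec_def cinner_def by (rule ext) (simp add: sum_distrib_left sum_distrib_right mult_ac sum.swap[of _ UNIV])

lemma cinner_on:
  assumes "orthonormal v n"
  shows "cinner (\<lambda>i. \<Sum>k<n. \<alpha> k * v k i) (\<lambda>i. \<Sum>l<n. \<beta> l * v l i) = (\<Sum>k<n. \<alpha> k * cnj (\<beta> k))"
proof -
  have "cinner (\<lambda>i. \<Sum>k<n. \<alpha> k * v k i) (\<lambda>i. \<Sum>l<n. \<beta> l * v l i) =
     (\<Sum>k<n. \<alpha> k * (\<Sum>l<n. cnj (\<beta> l) * cinner (v k) (v l)))"
    unfolding cinner_sum_left cinner_sum_right ..
  also have "\<dots> = (\<Sum>k<n. \<alpha> k * cnj (\<beta> k))"
  proof (rule sum.cong[OF refl])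
    fix k assume k: "k \<in> {..<n}"
    have "(\<Sum>l<n. cnj (\<beta> l) * cinner (v k) (v l)) = (\<Sum>l<n. if l = k then cnj (\<beta> k) else 0)"
      using assms k unfolding orthonormal_def by (intro sum.cong refl) auto
    also have "\<dots> = cnj (\<beta> k)" using k by simp
    finally show "\<alpha> k * (\<Sum>l<n. cnj (\<beta> l) * cinner (v k) (v l)) = \<alpha> k * cnj (\<beta> k)" by simp
  qed
  finally show ?thesis .
qed

lemma psd_rank:
  assumes "\<And>k. 0 \<le> p k"
  shows "psd (\<lambda>i j. \<Sum>k<n. of_real (p k) * v k i * cnj (v k j))"
  unfolding psd_def
proof
  fix u
  have "cinner (mat_vec (\<lambda>i j. \<Sum>k<n. of_real (p k) * v k i * cnj (v k j)) u) u =
      (\<Sum>k<n. of_real (p k) * cinner u (v k) * cinner (v k) u)"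
    unfolding mat_vec_rank cinner_sum_left ..
  also have "\<dots> = of_real (\<Sum>k<n. p k * (cmod (cinner u (v k)))\<^sup>2)"
    unfolding of_real_sum
  proof (intro sum.cong refl)
    fix k
    have z: "cinner (v k) u = cnj (cinner u (v k))" by (simp add: cinner_cnj)
    show "of_real (p k) * cinner u (v k) * cinner (v k) u = of_real (p k * (cmod (cinner u (v k)))\<^sup>2)"
      unfolding z by (simp add: complex_norm_square[symmetric] mult.assoc)
  qed
  finally show "Im (cinner (mat_vec (\<lambda>i j. \<Sum>k<n. of_real (p k) * v k i * cnj (v k j)) u) u) = 0 \<and>
        0 \<le> Re (cinner (mat_vec (\<lambda>i j. \<Sum>k<n. of_real (p k) * v k i * cnj (v k j)) u) u)"
    using assms by (simp add: sum_nonneg)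
qed

definition jordan_prop :: "('a::finite \<Rightarrow> 'a \<Rightarrow> complex) \<Rightarrow> ('a \<Rightarrow> 'a \<Rightarrow> complex) \<Rightarrow> bool" where
  "jordan_prop C P \<longleftrightarrow> (let N = (\<lambda>i j. P i j - C i j) in
       psd P \<and> psd N \<and> (\<forall>u v. cinner (mat_vec P u) (mat_vec N v) = 0))"

lemma jordan_exists:
  fixes C :: "'a::finite \<Rightarrow> 'a \<Rightarrow> complex"
  assumes herm: "herm C"
  shows "\<exists>P. jordan_prop C P"
proof -
  obtain v lam where on: "orthonormal v CARD('a)"
    and C: "C = (\<lambda>i j. \<Sum>k<CARD('a). of_real (lam k) * v k i * cnj (v k j))"
    using spectral_decomp[OF herm] by blast
  let ?n = "CARD('a)"
  define P where "P = (\<lambda>i j. \<Sum>k<?n. of_real (max (lam k) 0) * v k i * cnj (v k j))"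
  define N where "N = (\<lambda>i j. \<Sum>k<?n. of_real (max (- lam k) 0) * v k i * cnj (v k j))"
  have PN: "(\<lambda>i j. P i j - C i j) = N"
  proof (intro ext)
    fix i j
    have "P i j - C i j = (\<Sum>k<?n. (of_real (max (lam k) 0) - of_real (lam k)) * v k i * cnj (v k j))"
      unfolding P_def C by (simp add: sum_subtractf[symmetric] ring_distribs)
    also have "\<dots> = N i j" unfolding N_def
      by (intro sum.cong refl) (simp add: max_def flip: of_real_diff)
    finally show "P i j - C i j = N i j" .
  qed
  have "psd P" unfolding P_def by (rule psd_rank) simp
  moreover have "psd N" unfolding N_def by (rule psd_rank) simp
  moreover have "cinner (mat_vec P u) (mat_vec N w) = 0" for u w
    unfolding P_def N_def mat_vec_rank cinner_on[OF on]
    by (rule sum.neutral) (simp add: max_def)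
  ultimately have "jordan_prop C P" unfolding jordan_prop_def Let_def PN by blast
  then show ?thesis by blast
qed

lemma tr2_diff_left: "tr2 I (\<lambda>i j. A i j - B i j) D = tr2 I A D - tr2 I B D"
  unfolding tr2_def by (simp add: left_diff_distrib sum_subtractf)

lemma tr2_diff_right: "tr2 I D (\<lambda>i j. A i j - B i j) = tr2 I D A - tr2 I D B"
  unfolding tr2_def by (simp add: right_diff_distrib sum_subtractf)

lemma psd_herm: "psd (A :: 'a::finite \<Rightarrow> 'a \<Rightarrow> complex) \<Longrightarrow> herm A"
  using psd_on_herm[of UNIV A] psd_psd_on herm_on_UNIV by auto

lemma tr2_orth:
  fixes P N :: "'a::finite \<Rightarrow> 'a \<Rightarrow> complex"
  assumes hN: "herm N" and o: "\<forall>u v. cinner (mat_vec P u) (mat_vec N v) = 0"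
  shows "tr2 UNIV P N = 0"
proof -
  have mv: "mat_vec A (ev a) = (\<lambda>i. A i a)" for A :: "'a \<Rightarrow> 'a \<Rightarrow> complex" and a
    unfolding mat_vec_def ev_def by (rule ext) (simp add: if_distrib sum.delta cong: if_cong)
  have hc: "cnj (N i j) = N j i" for i j using hN unfolding herm_def by (metis complex_cnj_cnj)
  have "tr2 UNIV P N = (\<Sum>j\<in>UNIV. \<Sum>i\<in>UNIV. P i j * N j i)" unfolding tr2_def by (rule sum.swap)
  also have "\<dots> = (\<Sum>j\<in>UNIV. cinner (mat_vec P (ev j)) (mat_vec N (ev j)))"
    unfolding mv cinner_def hc ..
  also have "\<dots> = 0" using o by simp
  finally show ?thesis .
qed

lemma herm_tr2_zero:
  fixes X :: "'a::finite \<Rightarrow> 'a \<Rightarrow> complex"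
  assumes h: "herm X" and t: "Re (tr2 UNIV X X) \<le> 0"
  shows "X = (\<lambda>i j. 0)"
proof -
  have hc: "X j i = cnj (X i j)" for i j using h unfolding herm_def by blast
  have "tr2 UNIV X X = (\<Sum>i\<in>UNIV. cinner (X i) (X i))"
    unfolding tr2_def cinner_def by (intro sum.cong refl) (metis hc)
  then have "(\<Sum>i\<in>UNIV. Re (cinner (X i) (X i))) \<le> 0" using t by simp
  moreover have "0 \<le> (\<Sum>i\<in>UNIV. Re (cinner (X i) (X i)))" by (rule sum_nonneg) (simp add: cinner_self_nonneg)
  ultimately have "(\<Sum>i\<in>UNIV. Re (cinner (X i) (X i))) = 0" by linarith
  then have "\<forall>i\<in>UNIV. Re (cinner (X i) (X i)) = 0"
    by (subst (asm) sum_nonneg_eq_0_iff) (auto simp: cinner_self_nonneg)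
  then have "cinner (X i) (X i) = 0" for i using cinner_self_Re(2) by (simp add: complex_eq_iff)
  then have "X i = (\<lambda>j. 0)" for i using cinner_self_eq0 by blast
  then show ?thesis by (intro ext) metis
qed

lemma herm_diff: "herm A \<Longrightarrow> herm B \<Longrightarrow> herm (\<lambda>i j. A i j - B i j)"
  unfolding herm_def by (metis complex_cnj_diff)

lemma jordan_unique:
  fixes C :: "'a::finite \<Rightarrow> 'a \<Rightarrow> complex"
  assumes "jordan_prop C P1" "jordan_prop C P2"
  shows "P1 = P2"
proof -
  define N1 where "N1 = (\<lambda>i j. P1 i j - C i j)"
  define N2 where "N2 = (\<lambda>i j. P2 i j - C i j)"
  have p1: "psd P1" "psd N1" "\<forall>u v. cinner (mat_vec P1 u) (mat_vec N1 v) = 0"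
    using assms(1) unfolding jordan_prop_def Let_def N1_def by auto
  have p2: "psd P2" "psd N2" "\<forall>u v. cinner (mat_vec P2 u) (mat_vec N2 v) = 0"
    using assms(2) unfolding jordan_prop_def Let_def N2_def by auto
  define X where "X = (\<lambda>i j. P1 i j - P2 i j)"
  have X2: "X = (\<lambda>i j. N1 i j - N2 i j)" unfolding X_def N1_def N2_def by simp
  have hX: "herm X" unfolding X_def by (intro herm_diff psd_herm p1 p2)
  have "tr2 UNIV X X = tr2 UNIV X (\<lambda>i j. N1 i j - N2 i j)" by (subst (2) X2) (rule refl)
  also have "\<dots> = tr2 UNIV P1 N1 - tr2 UNIV P1 N2 - (tr2 UNIV P2 N1 - tr2 UNIV P2 N2)"
    unfolding X_def tr2_diff_left tr2_diff_right ..
  also have "\<dots> = - tr2 UNIV P1 N2 - tr2 UNIV P2 N1"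
    using tr2_orth[OF psd_herm[OF p1(2)] p1(3)] tr2_orth[OF psd_herm[OF p2(2)] p2(3)] by simp
  finally have eq: "tr2 UNIV X X = - tr2 UNIV P1 N2 - tr2 UNIV P2 N1" .
  have t1: "0 \<le> Re (tr2 UNIV P1 N2)"
    using trace_psd[of UNIV P1 N2] p1(1) p2(2) unfolding psd_psd_on by simp
  have t2: "0 \<le> Re (tr2 UNIV P2 N1)"
    using trace_psd[of UNIV P2 N1] p2(1) p1(2) unfolding psd_psd_on by simp
  have "Re (tr2 UNIV X X) \<le> 0" unfolding eq using t1 t2 by simp
  then have "X = (\<lambda>i j. 0)" by (rule herm_tr2_zero[OF hX])
  then have "\<forall>i j. P1 i j - P2 i j = 0" unfolding X_def by (simp add: fun_eq_iff)
  then show ?thesis by (intro ext) simp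
qed

lemma pos_part_prop:
  fixes C :: "'a::finite \<Rightarrow> 'a \<Rightarrow> complex"
  assumes herm: "herm C"
  shows "jordan_prop C (pos_part C)"
proof -
  have "\<exists>!P. jordan_prop C P" using jordan_exists[OF herm] jordan_unique by blast
  then have "jordan_prop C (THE P. jordan_prop C P)" by (rule theI')
  moreover have "pos_part C = (THE P. jordan_prop C P)" unfolding pos_part_def jordan_prop_def ..
  ultimately show ?thesis by simp
qed

lemma lin_add: "clinear_map \<phi> \<Longrightarrow> \<phi> (\<lambda>i j. A i j + B i j) = (\<lambda>a b. \<phi> A a b + \<phi> B a b)"
  unfolding clinear_map_def by blast

lemma lin_scale: "clinear_map \<phi> \<Longrightarrow> \<phi> (\<lambda>i j. c * A i j) = (\<lambda>a b. c * \<phi> A a b)"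
  unfolding clinear_map_def by blast

lemma lin_zero: "clinear_map \<phi> \<Longrightarrow> \<phi> (\<lambda>i j. 0) = (\<lambda>a b. 0)"
  using lin_scale[of \<phi> 0 "\<lambda>i j. 0"] by simp

lemma lin_sum:
  assumes lin: "clinear_map \<phi>" and fin: "finite K"
  shows "\<phi> (\<lambda>i j. \<Sum>k\<in>K. f k i j) = (\<lambda>a b. \<Sum>k\<in>K. \<phi> (f k) a b)"
  using fin
proof (induction K rule: finite_induct)
  case empty
  then show ?case using lin_zero[OF lin] by simp
next
  case (insert x F)
  have "\<phi> (\<lambda>i j. \<Sum>k\<in>insert x F. f k i j) = \<phi> (\<lambda>i j. f x i j + (\<Sum>k\<in>F. f k i j))"
    using insert by simp
  also have "\<dots> = (\<lambda>a b. \<phi> (f x) a b + \<phi> (\<lambda>i j. \<Sum>k\<in>F. f k i j) a b)"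
    by (rule lin_add[OF lin, of "f x" "\<lambda>i j. \<Sum>k\<in>F. f k i j", simplified])
  also have "\<dots> = (\<lambda>a b. \<Sum>k\<in>insert x F. \<phi> (f k) a b)" using insert by simp
  finally show ?case .
qed

lemma sum_delta_mult: "finite A \<Longrightarrow> s \<in> A \<Longrightarrow> (\<Sum>j\<in>A. f j * (if s = j then 1 else 0)) = (f s :: complex)"
  by (rule trans[OF sum.cong[OF refl, of _ _ "\<lambda>j. if j = s then f j else 0"]]) auto

lemma choi_expand:
  fixes \<phi> :: "('k::finite \<Rightarrow> 'k \<Rightarrow> complex) \<Rightarrow> ('h::finite \<Rightarrow> 'h \<Rightarrow> complex)"
  assumes lin: "clinear_map \<phi>"
  shows "\<phi> M a b = (\<Sum>i\<in>UNIV. \<Sum>j\<in>UNIV. M i j * choi \<phi> (i, a) (j, b))"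
proof -
  have M: "M = (\<lambda>r s. \<Sum>i\<in>UNIV. \<Sum>j\<in>UNIV. M i j * mat_unit i j r s)"
  proof (intro ext)
    fix r s
    have "(\<Sum>i\<in>UNIV. \<Sum>j\<in>UNIV. M i j * mat_unit i j r s) = (\<Sum>i\<in>UNIV. if i = r then (\<Sum>j\<in>UNIV. if j = s then M i j else 0) else 0)"
      unfolding mat_unit_def by (intro sum.cong refl) (auto simp: sum_delta_mult)
    also have "\<dots> = M r s" by (simp only: sum.delta UNIV_I if_True finite)
    finally show "M r s = (\<Sum>i\<in>UNIV. \<Sum>j\<in>UNIV. M i j * mat_unit i j r s)" by simp
  qed
  have "\<phi> (\<lambda>r s. \<Sum>i\<in>UNIV. \<Sum>j\<in>UNIV. M i j * mat_unit i j r s) =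
        (\<lambda>a b. \<Sum>i\<in>UNIV. \<phi> (\<lambda>r s. \<Sum>j\<in>UNIV. M i j * mat_unit i j r s) a b)"
    by (rule lin_sum[OF lin]) simp
  also have "\<dots> = (\<lambda>a b. \<Sum>i\<in>UNIV. \<Sum>j\<in>UNIV. \<phi> (\<lambda>r s. M i j * mat_unit i j r s) a b)"
    by (subst lin_sum[OF lin]) simp_all
  also have "\<dots> = (\<lambda>a b. \<Sum>i\<in>UNIV. \<Sum>j\<in>UNIV. M i j * \<phi> (mat_unit i j) a b)"
    using lin_scale[OF lin] by simp
  finally have "\<phi> M = (\<lambda>a b. \<Sum>i\<in>UNIV. \<Sum>j\<in>UNIV. M i j * \<phi> (mat_unit i j) a b)" using M by metis
  then show ?thesis unfolding choi_def by simp
qed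

lemma psd_rank1: "psd (\<lambda>r s. f r * cnj (f s))"
  using psd_rank[where p="\<lambda>_. 1" and n="1::nat" and v="\<lambda>_. f"] by (simp add: card_lessThan)

lemma polar_aux: fixes D1 D2 E1 E2 u w p q :: complex
  assumes 1: "D1 + u + w + D2 = cnj (E1 + p + q + E2)"
  and 2: "D1 - \<i> * u + \<i> * w + D2 = cnj (E1 - \<i> * p + \<i> * q + E2)"
  and d1: "D1 = cnj E1" and d2: "D2 = cnj E2"
  shows "w = cnj p"
proof -
  have e1: "u + w = cnj p + cnj q" using 1 d1 d2 by simp
  have "\<i> * (w - u) = \<i> * (cnj p - cnj q)" using 2 d1 d2 by (simp add: algebra_simps)
  then have e2: "w - u = cnj p - cnj q" by simp
  have "2 * w = (u + w) + (w - u)" by simp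
  also have "\<dots> = 2 * cnj p" unfolding e1 e2 by simp
  finally show ?thesis by simp
qed

lemma choi_herm:
  fixes \<phi> :: "('k::finite \<Rightarrow> 'k \<Rightarrow> complex) \<Rightarrow> ('h::finite \<Rightarrow> 'h \<Rightarrow> complex)"
  assumes lin: "clinear_map \<phi>" and pos: "positive_map \<phi>"
  shows "herm (choi \<phi>)"
proof -
  let ?C = "choi \<phi>"
  have key: "(\<Sum>r\<in>UNIV. \<Sum>s\<in>UNIV. f r * cnj (f s) * ?C (r, b) (s, a)) =
        cnj (\<Sum>r\<in>UNIV. \<Sum>s\<in>UNIV. f r * cnj (f s) * ?C (r, a) (s, b))" for f a b
  proof -
    have "psd (\<phi> (\<lambda>r s. f r * cnj (f s)))" using pos psd_rank1 unfolding positive_map_def by blast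
    then have "herm (\<phi> (\<lambda>r s. f r * cnj (f s)))" by (rule psd_herm)
    then have "\<phi> (\<lambda>r s. f r * cnj (f s)) b a = cnj (\<phi> (\<lambda>r s. f r * cnj (f s)) a b)"
      unfolding herm_def by blast
    then show ?thesis by (simp only: choi_expand[OF lin])
  qed
  have sum1: "(\<Sum>r\<in>UNIV. \<Sum>s\<in>UNIV. (\<alpha> * ev i r + \<beta> * ev j r) * cnj (\<alpha> * ev i s + \<beta> * ev j s) * G r s) =
      \<alpha> * cnj \<alpha> * G i i + \<alpha> * cnj \<beta> * G i j + \<beta> * cnj \<alpha> * G j i + \<beta> * cnj \<beta> * G j j"
    if "i \<noteq> j" for \<alpha> \<beta> i j and G :: "'k \<Rightarrow> 'k \<Rightarrow> complex"
  proof -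
    have c: "cnj (\<alpha> * ev i s + \<beta> * ev j s) = cnj \<alpha> * ev i s + cnj \<beta> * ev j s" for s by (simp add: ev_def)
    have "(\<Sum>r\<in>UNIV. \<Sum>s\<in>UNIV. (\<alpha> * ev i r + \<beta> * ev j r) * cnj (\<alpha> * ev i s + \<beta> * ev j s) * G r s) =
        (\<Sum>r\<in>UNIV. (\<Sum>s\<in>UNIV. (G r s * (\<alpha> * ev i r + \<beta> * ev j r)) * (cnj \<alpha> * ev i s + cnj \<beta> * ev j s)))"
      unfolding c by (simp add: mult_ac)
    also have "\<dots> = (\<Sum>r\<in>UNIV. (G r i * (\<alpha> * ev i r + \<beta> * ev j r)) * cnj \<alpha> + (G r j * (\<alpha> * ev i r + \<beta> * ev j r)) * cnj \<beta>)"
      by (subst sum_ev2[where I=UNIV, OF _ _ _ that]) simp_all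
    also have "\<dots> = (\<Sum>r\<in>UNIV. (cnj \<alpha> * G r i + cnj \<beta> * G r j) * (\<alpha> * ev i r + \<beta> * ev j r))"
      by (simp add: algebra_simps)
    also have "\<dots> = (cnj \<alpha> * G i i + cnj \<beta> * G i j) * \<alpha> + (cnj \<alpha> * G j i + cnj \<beta> * G j j) * \<beta>"
      by (subst sum_ev2[where I=UNIV, OF _ _ _ that]) simp_all
    finally show ?thesis by (simp add: algebra_simps)
  qed
  have sum0: "(\<Sum>r\<in>UNIV. \<Sum>s\<in>UNIV. ev i r * cnj (ev i s) * G r s) = G i i" for i and G :: "'k \<Rightarrow> 'k \<Rightarrow> complex"
  proof -
    have c: "cnj (ev i s) = ev i s" for s by (simp add: ev_def)
    have in1: "(\<Sum>s\<in>UNIV. ev i r * cnj (ev i s) * G r s) = G r i * ev i r" for r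
    proof -
      have "(\<Sum>s\<in>UNIV. ev i r * cnj (ev i s) * G r s) = (\<Sum>s\<in>UNIV. (ev i r * G r s) * ev i s)"
        by (simp add: c mult_ac)
      also have "\<dots> = ev i r * G r i" by (rule sum_ev_right) simp_all
      finally show ?thesis by simp
    qed
    show ?thesis unfolding in1 by (rule sum_ev_right) simp_all
  qed
  show ?thesis
    unfolding herm_def
  proof (intro allI)
    fix x y :: "'k \<times> 'h"
    obtain i a where x: "x = (i, a)" by (cases x)
    obtain j b where y: "y = (j, b)" by (cases y)
    show "?C y x = cnj (?C x y)"
    proof (cases "i = j")
      case True
      show ?thesis using key[of "ev i" a b] unfolding x y True sum0 by simp
    next
      case False
      have 1: "?C (i,b) (i,a) + ?C (i,b) (j,a) + ?C (j,b) (i,a) + ?C (j,b) (j,a) =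
          cnj (?C (i,a) (i,b) + ?C (i,a) (j,b) + ?C (j,a) (i,b) + ?C (j,a) (j,b))"
        using key[of "\<lambda>r. 1 * ev i r + 1 * ev j r" a b] unfolding sum1[OF False] by simp
      have 2: "?C (i,b) (i,a) - \<i> * ?C (i,b) (j,a) + \<i> * ?C (j,b) (i,a) + ?C (j,b) (j,a) =
          cnj (?C (i,a) (i,b) - \<i> * ?C (i,a) (j,b) + \<i> * ?C (j,a) (i,b) + ?C (j,a) (j,b))"
        using key[of "\<lambda>r. 1 * ev i r + \<i> * ev j r" a b] unfolding sum1[OF False] by simp
      have d1: "?C (i,b) (i,a) = cnj (?C (i,a) (i,b))" using key[of "ev i" a b] unfolding sum0 by simp
      have d2: "?C (j,b) (j,a) = cnj (?C (j,a) (j,b))" using key[of "ev j" a b] unfolding sum0 by simp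
      have "?C (j,b) (i,a) = cnj (?C (i,a) (j,b))"
        by (rule polar_aux[OF 1 2 d1 d2])
      then show ?thesis unfolding x y .
    qed
  qed
qed

lemma sum_prod_split: "(\<Sum>z\<in>A \<times> B. g z) = (\<Sum>x\<in>A. \<Sum>y\<in>B. g (x, y))"
  by (simp add: sum.cartesian_product)

lemma sum_UNIV_pair: "(\<Sum>z\<in>(UNIV :: ('a::finite \<times> 'b::finite) set). g z) = (\<Sum>x\<in>UNIV. \<Sum>y\<in>UNIV. g (x, y))"
  by (simp add: sum.cartesian_product flip: UNIV_Times_UNIV)

lemma psd_on_rank1: "psd_on I (\<lambda>\<alpha> \<beta>. f \<alpha> * cnj (f \<beta>))"
  unfolding psd_on_qfo
proof
  fix u
  define z where "z = (\<Sum>\<alpha>\<in>I. f \<alpha> * cnj (u \<alpha>))"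
  have "qfo I (\<lambda>\<alpha> \<beta>. f \<alpha> * cnj (f \<beta>)) u = (\<Sum>\<alpha>\<in>I. f \<alpha> * cnj (u \<alpha>)) * (\<Sum>\<beta>\<in>I. cnj (f \<beta>) * u \<beta>)"
    unfolding qfo_def sum_product by (intro sum.cong refl) (simp add: mult_ac)
  also have "(\<Sum>\<beta>\<in>I. cnj (f \<beta>) * u \<beta>) = cnj (\<Sum>\<alpha>\<in>I. f \<alpha> * cnj (u \<alpha>))" by (simp add: cnj_sum)
  finally have "qfo I (\<lambda>\<alpha> \<beta>. f \<alpha> * cnj (f \<beta>)) u = z * cnj z" unfolding z_def .
  then show "Im (qfo I (\<lambda>\<alpha> \<beta>. f \<alpha> * cnj (f \<beta>)) u) = 0 \<and> 0 \<le> Re (qfo I (\<lambda>\<alpha> \<beta>. f \<alpha> * cnj (f \<beta>)) u)"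
    by (simp add: complex_mult_cnj)
qed

lemma tensor_id_app: "tensor_id \<phi> A (a, p) (b, q) = \<phi> (\<lambda>i j. A (i, p) (j, q)) a b"
  unfolding tensor_id_def by simp


lemma shuffle1:
  fixes C :: "('k::finite \<times> 'h::finite) \<Rightarrow> ('k \<times> 'h) \<Rightarrow> complex"
    and x :: "nat \<Rightarrow> 'k \<Rightarrow> complex" and y :: "nat \<Rightarrow> 'h \<Rightarrow> complex"
  shows "qfo (UNIV \<times> {..<k}) (\<lambda>(a, p) (b, q). \<Sum>i\<in>UNIV. \<Sum>j\<in>UNIV. cnj (x p i) * x q j * C (i, a) (j, b)) (\<lambda>(b, q). y q b)
     = qfo UNIV C (\<lambda>(i, a). \<Sum>p<k. x p i * y p a)"
proof -
  have sNH: "\<And>g. (\<Sum>x\<in>(UNIV::'h set). \<Sum>y\<in>{..<k}. g x y) = (\<Sum>y\<in>{..<k}. \<Sum>x\<in>UNIV. g x y)" by (rule sum.swap)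
  have sNK: "\<And>g. (\<Sum>x\<in>(UNIV::'k set). \<Sum>y\<in>{..<k}. g x y) = (\<Sum>y\<in>{..<k}. \<Sum>x\<in>UNIV. g x y)" by (rule sum.swap)
  have sKH: "\<And>g. (\<Sum>x\<in>(UNIV::'h set). \<Sum>y\<in>(UNIV::'k set). g x y) = (\<Sum>y\<in>UNIV. \<Sum>x\<in>UNIV. g x y)" by (rule sum.swap)
  show ?thesis
    unfolding qfo_def sum_prod_split sum_UNIV_pair
    apply (simp add: sum_distrib_left sum_distrib_right)
    apply (simp only: sNH sNK sKH)
    apply (simp add: mult_ac)
    done
qed

lemma shuffle2:
  fixes C :: "('k::finite \<times> 'h::finite) \<Rightarrow> ('k \<times> 'h) \<Rightarrow> complex"
    and A :: "('k \<times> nat) \<Rightarrow> ('k \<times> nat) \<Rightarrow> complex" and w :: "'h \<times> nat \<Rightarrow> complex"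
  shows "qfo (UNIV \<times> {..<k}) (\<lambda>(a, p) (b, q). \<Sum>i\<in>UNIV. \<Sum>j\<in>UNIV. A (i, p) (j, q) * C (i, a) (j, b)) w
     = tr2 (UNIV \<times> {..<k}) A (\<lambda>(j, q) (i, p). \<Sum>a\<in>UNIV. \<Sum>b\<in>UNIV. C (i, a) (j, b) * w (b, q) * cnj (w (a, p)))"
proof -
  have sNH: "\<And>g. (\<Sum>x\<in>(UNIV::'h set). \<Sum>y\<in>{..<k}. g x y) = (\<Sum>y\<in>{..<k}. \<Sum>x\<in>UNIV. g x y)" by (rule sum.swap)
  have sNK: "\<And>g. (\<Sum>x\<in>(UNIV::'k set). \<Sum>y\<in>{..<k}. g x y) = (\<Sum>y\<in>{..<k}. \<Sum>x\<in>UNIV. g x y)" by (rule sum.swap)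
  have sKH: "\<And>g. (\<Sum>x\<in>(UNIV::'h set). \<Sum>y\<in>(UNIV::'k set). g x y) = (\<Sum>y\<in>UNIV. \<Sum>x\<in>UNIV. g x y)" by (rule sum.swap)
  show ?thesis
    unfolding qfo_def tr2_def sum_prod_split
    apply (simp add: sum_distrib_left sum_distrib_right)
    apply (simp only: sNH sNK sKH)
    apply (simp add: mult_ac)
    done
qed

lemma shuffle3:
  fixes C :: "('k::finite \<times> 'h::finite) \<Rightarrow> ('k \<times> 'h) \<Rightarrow> complex"
    and u :: "('k \<times> nat) \<Rightarrow> complex" and w :: "'h \<times> nat \<Rightarrow> complex"
  shows "qfo (UNIV \<times> {..<k}) (\<lambda>(j, q) (i, p). \<Sum>a\<in>UNIV. \<Sum>b\<in>UNIV. C (i, a) (j, b) * w (b, q) * cnj (w (a, p))) u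
     = qfo UNIV C (\<lambda>(j, b). \<Sum>q<k. cnj (u (j, q)) * w (b, q))"
proof -
  have sNH: "\<And>g. (\<Sum>x\<in>(UNIV::'h set). \<Sum>y\<in>{..<k}. g x y) = (\<Sum>y\<in>{..<k}. \<Sum>x\<in>UNIV. g x y)" by (rule sum.swap)
  have sNK: "\<And>g. (\<Sum>x\<in>(UNIV::'k set). \<Sum>y\<in>{..<k}. g x y) = (\<Sum>y\<in>{..<k}. \<Sum>x\<in>UNIV. g x y)" by (rule sum.swap)
  have sKH: "\<And>g. (\<Sum>x\<in>(UNIV::'h set). \<Sum>y\<in>(UNIV::'k set). g x y) = (\<Sum>y\<in>UNIV. \<Sum>x\<in>UNIV. g x y)" by (rule sum.swap)
  show ?thesis
    unfolding qfo_def
    apply (subst sum.swap[where A="UNIV \<times> {..<k}"])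
    unfolding sum_prod_split sum_UNIV_pair
    apply (simp add: sum_distrib_left sum_distrib_right cnj_sum)
    apply (simp only: sNH sNK sKH)
    apply (simp add: mult_ac)
    done
qed

lemma tensor_choi:
  fixes \<phi> :: "('k::finite \<Rightarrow> 'k \<Rightarrow> complex) \<Rightarrow> ('h::finite \<Rightarrow> 'h \<Rightarrow> complex)"
  assumes lin: "clinear_map \<phi>"
  shows "tensor_id \<phi> A = (\<lambda>(a, p) (b, q). \<Sum>i\<in>UNIV. \<Sum>j\<in>UNIV. A (i, p) (j, q) * choi \<phi> (i, a) (j, b))"
proof (intro ext)
  fix z1 z2 :: "'h \<times> nat"
  obtain a p where z1: "z1 = (a, p)" by (cases z1)
  obtain b q where z2: "z2 = (b, q)" by (cases z2)
  have "tensor_id \<phi> A (a, p) (b, q) = \<phi> (\<lambda>i j. A (i, p) (j, q)) a b" by (rule tensor_id_app)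
  also have "\<dots> = (\<Sum>i\<in>UNIV. \<Sum>j\<in>UNIV. A (i, p) (j, q) * choi \<phi> (i, a) (j, b))"
    by (rule choi_expand[OF lin])
  finally show "tensor_id \<phi> A z1 z2 = (\<lambda>(a, p) (b, q). \<Sum>i\<in>UNIV. \<Sum>j\<in>UNIV. A (i, p) (j, q) * choi \<phi> (i, a) (j, b)) z1 z2"
    unfolding z1 z2 by simp
qed

lemma KP1:
  fixes \<phi> :: "('k::finite \<Rightarrow> 'k \<Rightarrow> complex) \<Rightarrow> ('h::finite \<Rightarrow> 'h \<Rightarrow> complex)"
    and x :: "nat \<Rightarrow> 'k \<Rightarrow> complex" and y :: "nat \<Rightarrow> 'h \<Rightarrow> complex"
  assumes lin: "clinear_map \<phi>" and kp: "k_positive k \<phi>"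
  shows "Im (qfo UNIV (choi \<phi>) (\<lambda>(i, a). \<Sum>p<k. x p i * y p a)) = 0 \<and>
         0 \<le> Re (qfo UNIV (choi \<phi>) (\<lambda>(i, a). \<Sum>p<k. x p i * y p a))"
proof -
  define f where "f = (\<lambda>\<alpha>::'k \<times> nat. cnj (x (snd \<alpha>) (fst \<alpha>)))"
  define A where "A = (\<lambda>\<alpha> \<beta>. f \<alpha> * cnj (f \<beta>))"
  have pA: "psd_on (UNIV \<times> {..<k}) A" unfolding A_def by (rule psd_on_rank1)
  have pT: "psd_on (UNIV \<times> {..<k}) (tensor_id \<phi> A)" using kp pA unfolding k_positive_def by blast
  have T: "tensor_id \<phi> A = (\<lambda>(a, p) (b, q). \<Sum>i\<in>UNIV. \<Sum>j\<in>UNIV. cnj (x p i) * x q j * choi \<phi> (i, a) (j, b))"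
    unfolding tensor_choi[OF lin] by (simp add: A_def f_def)
  have "qfo (UNIV \<times> {..<k}) (tensor_id \<phi> A) (\<lambda>(b, q). y q b) = qfo UNIV (choi \<phi>) (\<lambda>(i, a). \<Sum>p<k. x p i * y p a)"
    unfolding T by (rule shuffle1)
  then show ?thesis using pT unfolding psd_on_qfo by metis
qed

lemma KP2:
  fixes \<phi> :: "('k::finite \<Rightarrow> 'k \<Rightarrow> complex) \<Rightarrow> ('h::finite \<Rightarrow> 'h \<Rightarrow> complex)"
  assumes lin: "clinear_map \<phi>" and herm: "herm (choi \<phi>)"
    and bp: "\<And>(x :: nat \<Rightarrow> 'k \<Rightarrow> complex) (y :: nat \<Rightarrow> 'h \<Rightarrow> complex). 0 \<le> Re (qfo UNIV (choi \<phi>) (\<lambda>(i, a). \<Sum>p<k. x p i * y p a))"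
  shows "k_positive k \<phi>"
  unfolding k_positive_def
proof (intro allI impI)
  fix A :: "'k \<times> nat \<Rightarrow> 'k \<times> nat \<Rightarrow> complex"
  assume pA: "psd_on (UNIV \<times> {..<k}) A"
  show "psd_on (UNIV \<times> {..<k}) (tensor_id \<phi> A)"
    unfolding psd_on_qfo
  proof
    fix w :: "'h \<times> nat \<Rightarrow> complex"
    define G where "G = (\<lambda>(j, q) (i, p). \<Sum>a\<in>UNIV. \<Sum>b\<in>UNIV. choi \<phi> (i, a) (j, b) * w (b, q) * cnj (w (a, p)))"
    have e: "qfo (UNIV \<times> {..<k}) (tensor_id \<phi> A) w = tr2 (UNIV \<times> {..<k}) A G"
      unfolding tensor_choi[OF lin] G_def by (rule shuffle2)
    have pG: "psd_on (UNIV \<times> {..<k}) G"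
      unfolding psd_on_qfo
    proof
      fix u :: "'k \<times> nat \<Rightarrow> complex"
      have "qfo (UNIV \<times> {..<k}) G u = qfo UNIV (choi \<phi>) (\<lambda>(j, b). \<Sum>q<k. cnj (u (j, q)) * w (b, q))"
        unfolding G_def by (rule shuffle3)
      moreover have "0 \<le> Re (qfo UNIV (choi \<phi>) (\<lambda>(j, b). \<Sum>q<k. cnj (u (j, q)) * w (b, q)))"
        using bp[of "\<lambda>q j. cnj (u (j, q))" "\<lambda>q b. w (b, q)"] by simp
      moreover have "Im (qfo UNIV (choi \<phi>) (\<lambda>(j, b). \<Sum>q<k. cnj (u (j, q)) * w (b, q))) = 0"
        using qf_real_herm[OF herm] unfolding cinner_mat_vec_qfo by blast
      ultimately show "Im (qfo (UNIV \<times> {..<k}) G u) = 0 \<and> 0 \<le> Re (qfo (UNIV \<times> {..<k}) G u)" by simp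
    qed
    show "Im (qfo (UNIV \<times> {..<k}) (tensor_id \<phi> A) w) = 0 \<and> 0 \<le> Re (qfo (UNIV \<times> {..<k}) (tensor_id \<phi> A) w)"
      unfolding e by (rule trace_psd[OF _ pA pG]) simp
  qed
qed

lemma vnorm_ev: "vnorm (ev (z::'a::finite)) = 1"
proof -
  have "(\<Sum>i\<in>UNIV. (cmod (ev z i))\<^sup>2) = (\<Sum>i\<in>UNIV. if i = z then 1 else 0)"
    by (rule sum.cong) (auto simp: ev_def)
  then show ?thesis unfolding vnorm_def by simp
qed

lemma qfo_bound:
  fixes M :: "'a::finite \<Rightarrow> 'a \<Rightarrow> complex"
  assumes v: "vnorm v = 1"
  shows "Re (qfo UNIV M v) \<le> (\<Sum>i\<in>UNIV. \<Sum>j\<in>UNIV. cmod (M i j))"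
proof -
  have vi: "cmod (v i) \<le> 1" for i
  proof -
    have "(cmod (v i))\<^sup>2 \<le> (\<Sum>j\<in>UNIV. (cmod (v j))\<^sup>2)" by (rule member_le_sum) auto
    also have "\<dots> = 1" using v unfolding vnorm_def by (simp add: real_sqrt_eq_1_iff)
    finally show ?thesis by (simp add: power_le_one_iff abs_le_iff)
  qed
  have "Re (qfo UNIV M v) \<le> cmod (qfo UNIV M v)" by (rule complex_Re_le_cmod)
  also have "\<dots> \<le> (\<Sum>i\<in>UNIV. \<Sum>j\<in>UNIV. cmod (M i j * v j * cnj (v i)))"
    unfolding qfo_def by (rule order_trans[OF norm_sum sum_mono]) (rule norm_sum)
  also have "\<dots> \<le> (\<Sum>i\<in>UNIV. \<Sum>j\<in>UNIV. cmod (M i j))"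
  proof (intro sum_mono)
    fix i j
    have "cmod (M i j * v j * cnj (v i)) = cmod (M i j) * (cmod (v j) * cmod (v i))" by (simp add: norm_mult)
    also have "\<dots> \<le> cmod (M i j) * 1"
      by (intro mult_left_mono) (auto intro: mult_le_one vi)
    finally show "cmod (M i j * v j * cnj (v i)) \<le> cmod (M i j)" by simp
  qed
  finally show ?thesis .
qed

lemma vnorm_le_sum: "vnorm u \<le> (\<Sum>i\<in>UNIV. cmod (u i))"
  using L2_set_le_sum[of UNIV "\<lambda>i. cmod (u i)"] unfolding vnorm_def L2_set_def by simp

lemma vnorm_mat_vec_bound:
  fixes M :: "'a::finite \<Rightarrow> 'a \<Rightarrow> complex"
  assumes v: "vnorm v = 1"
  shows "vnorm (mat_vec M v) \<le> (\<Sum>i\<in>UNIV. \<Sum>j\<in>UNIV. cmod (M i j))"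
proof -
  have vi: "cmod (v i) \<le> 1" for i
  proof -
    have "(cmod (v i))\<^sup>2 \<le> (\<Sum>j\<in>UNIV. (cmod (v j))\<^sup>2)" by (rule member_le_sum) auto
    also have "\<dots> = 1" using v unfolding vnorm_def by (simp add: real_sqrt_eq_1_iff)
    finally show ?thesis by (simp add: power_le_one_iff abs_le_iff)
  qed
  have "vnorm (mat_vec M v) \<le> (\<Sum>i\<in>UNIV. cmod (mat_vec M v i))" by (rule vnorm_le_sum)
  also have "\<dots> \<le> (\<Sum>i\<in>UNIV. \<Sum>j\<in>UNIV. cmod (M i j))"
  proof (intro sum_mono)
    fix i
    have "cmod (mat_vec M v i) \<le> (\<Sum>j\<in>UNIV. cmod (M i j * v j))" unfolding mat_vec_def by (rule norm_sum)
    also have "\<dots> \<le> (\<Sum>j\<in>UNIV. cmod (M i j))"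
      by (intro sum_mono) (simp add: norm_mult mult_left_le vi)
    finally show "cmod (mat_vec M v i) \<le> (\<Sum>j\<in>UNIV. cmod (M i j))" .
  qed
  finally show ?thesis .
qed

lemma opnorm_pos:
  fixes P :: "'a::finite \<Rightarrow> 'a \<Rightarrow> complex"
  assumes "P \<noteq> (\<lambda>i j. 0)"
  shows "opnorm P > 0"
proof -
  obtain r s where rs: "P r s \<noteq> 0" using assms by (meson ext)
  have mv: "mat_vec P (ev s) = (\<lambda>i. P i s)"
    unfolding mat_vec_def ev_def by (rule ext) (simp add: if_distrib sum.delta cong: if_cong)
  have "0 < (cmod (P r s))\<^sup>2" using rs by simp
  also have "\<dots> \<le> (\<Sum>i\<in>UNIV. (cmod (P i s))\<^sup>2)" by (rule member_le_sum) auto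
  finally have pos: "0 < vnorm (mat_vec P (ev s))" unfolding mv vnorm_def by simp
  have bdd: "bdd_above ((\<lambda>v. vnorm (mat_vec P v)) ` {v. vnorm v = 1})"
    by (rule bdd_aboveI2[where M="\<Sum>i\<in>UNIV. \<Sum>j\<in>UNIV. cmod (P i j)"]) (auto intro: vnorm_mat_vec_bound)
  have "vnorm (mat_vec P (ev s)) \<le> opnorm P"
    unfolding opnorm_def by (rule cSUP_upper[OF _ bdd]) (simp add: vnorm_ev)
  then show ?thesis using pos by simp
qed

lemma mat_unit_rank1: "mat_unit i i = (\<lambda>r s. ev i r * cnj (ev i s))"
  unfolding mat_unit_def ev_def by (intro ext) simp

lemma choi_diag:
  fixes \<phi> :: "('k::finite \<Rightarrow> 'k \<Rightarrow> complex) \<Rightarrow> ('h::finite \<Rightarrow> 'h \<Rightarrow> complex)"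
  assumes pos: "positive_map \<phi>"
  shows "Im (choi \<phi> x x) = 0 \<and> 0 \<le> Re (choi \<phi> x x)"
proof -
  obtain i a where x: "x = (i, a)" by (cases x)
  have "psd (\<phi> (mat_unit i i))" using pos psd_rank1 unfolding positive_map_def mat_unit_rank1 by blast
  then have "psd_on UNIV (\<phi> (mat_unit i i))" unfolding psd_psd_on .
  then show ?thesis using psd_on_diag[of UNIV a] unfolding x choi_def by simp
qed

lemma phi_zero_of_choi:
  fixes \<phi> :: "('k::finite \<Rightarrow> 'k \<Rightarrow> complex) \<Rightarrow> ('h::finite \<Rightarrow> 'h \<Rightarrow> complex)"
  assumes lin: "clinear_map \<phi>" and c: "\<And>x y. choi \<phi> x y = 0"
  shows "\<phi> = (\<lambda>A a b. 0)"
proof (intro ext)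
  fix M a b
  show "\<phi> M a b = 0" by (subst choi_expand[OF lin]) (simp add: c)
qed

lemma pos_part_nonzero:
  fixes \<phi> :: "('k::finite \<Rightarrow> 'k \<Rightarrow> complex) \<Rightarrow> ('h::finite \<Rightarrow> 'h \<Rightarrow> complex)"
  assumes lin: "clinear_map \<phi>" and pos: "positive_map \<phi>" and nz: "\<phi> \<noteq> (\<lambda>A a b. 0)"
  shows "pos_part (choi \<phi>) \<noteq> (\<lambda>i j. 0)"
proof
  let ?C = "choi \<phi>"
  assume P0: "pos_part ?C = (\<lambda>i j. 0)"
  have "jordan_prop ?C (pos_part ?C)" by (rule pos_part_prop[OF choi_herm[OF lin pos]])
  then have "psd (\<lambda>i j. 0 - ?C i j)" unfolding P0 jordan_prop_def Let_def by blast
  then have pN: "psd_on UNIV (\<lambda>i j. 0 - ?C i j)" unfolding psd_psd_on .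
  have d0: "(\<lambda>i j. 0 - ?C i j) x x = 0" for x
  proof -
    have "0 \<le> Re (0 - ?C x x)" "Im (0 - ?C x x) = 0" using psd_on_diag[OF _ _ pN, of x] by auto
    moreover have "0 \<le> Re (?C x x)" "Im (?C x x) = 0" using choi_diag[OF pos] by auto
    ultimately show ?thesis by (simp add: complex_eq_iff)
  qed
  have "(\<lambda>i j. 0 - ?C i j) y x = 0" for x y
    using psd_on_zero_diag[OF _ _ _ pN d0, of x y] by simp
  then have "?C y x = 0" for x y by simp
  then have "\<phi> = (\<lambda>A a b. 0)" by (rule phi_zero_of_choi[OF lin])
  with nz show False by simp
qed

lemma choi_cp_qf:
  fixes \<phi> :: "('k::finite \<Rightarrow> 'k \<Rightarrow> complex) \<Rightarrow> ('h::finite \<Rightarrow> 'h \<Rightarrow> complex)"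
  assumes v: "vnorm v = 1"
  shows "Re (cinner (mat_vec (choi_cp \<phi>) v) v) = 1 - inverse (opnorm (pos_part (choi \<phi>))) * Re (qfo UNIV (choi \<phi>) v)"
proof -
  define c where "c = inverse (opnorm (pos_part (choi \<phi>)))"
  have mv: "mat_vec (choi_cp \<phi>) v = (\<lambda>x. v x - of_real c * mat_vec (choi \<phi>) v x)"
  proof (rule ext)
    fix x
    have "mat_vec (choi_cp \<phi>) v x = (\<Sum>y\<in>UNIV. (if x = y then 1 else 0) * v y) - (\<Sum>y\<in>UNIV. of_real c * choi \<phi> x y * v y)"
      unfolding mat_vec_def choi_cp_def c_def by (simp add: left_diff_distrib sum_subtractf)
    also have "\<dots> = v x - of_real c * mat_vec (choi \<phi>) v x"
      unfolding mat_vec_def by (simp add: sum_distrib_left mult_ac sum_delta_mult)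
    finally show "mat_vec (choi_cp \<phi>) v x = v x - of_real c * mat_vec (choi \<phi>) v x" .
  qed
  have vv: "Re (cinner v v) = 1" using v unfolding vnorm_cinner
    by (metis cinner_self_nonneg real_sqrt_eq_1_iff)
  show ?thesis unfolding mv cinner_diff_left cinner_scale_left cinner_mat_vec_qfo c_def[symmetric]
    using vv by simp
qed

lemma schmidt_scale:
  assumes "v \<in> schmidt k"
  shows "(\<lambda>z. c * v z) \<in> schmidt k"
proof -
  obtain x y where v: "v = (\<lambda>(a, b). \<Sum>i<k. x i a * y i b)" using assms unfolding schmidt_def by blast
  show ?thesis unfolding schmidt_def mem_Collect_eq
    apply (rule exI[of _ "\<lambda>i a. c * x i a"], rule exI[of _ y])
    unfolding v by (intro ext) (auto simp: sum_distrib_left mult_ac)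
qed

lemma unit_iff:
  fixes C :: "('k::finite \<times> 'h::finite) \<Rightarrow> ('k \<times> 'h) \<Rightarrow> complex"
  shows "(\<forall>v\<in>schmidt k. 0 \<le> Re (qfo UNIV C v)) \<longleftrightarrow> (\<forall>v\<in>schmidt k. vnorm v = 1 \<longrightarrow> 0 \<le> Re (qfo UNIV C v))"
proof (intro iffI ballI impI)
  fix v :: "'k \<times> 'h \<Rightarrow> complex"
  assume H: "\<forall>v\<in>schmidt k. vnorm v = 1 \<longrightarrow> 0 \<le> Re (qfo UNIV C v)" and vS: "v \<in> schmidt k"
  show "0 \<le> Re (qfo UNIV C v)"
  proof (cases "v = (\<lambda>z. 0)")
    case True then show ?thesis by (simp add: qfo_def)
  next
    case False
    define r where "r = Re (cinner v v)"
    have r: "cinner v v = of_real r" "r > 0"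
      using cinner_self_Re[of v] cinner_self_nonneg[of v] False cinner_self_eq0[of v] unfolding r_def
      by (auto simp: complex_eq_iff)
    define v' where "v' = (\<lambda>z. of_real (1 / sqrt r) * v z)"
    have "cinner v' v' = 1" unfolding v'_def cinner_scale_left cinner_scale_right r(1)
      using r(2) by (simp flip: of_real_mult)
    then have "vnorm v' = 1" unfolding vnorm_cinner by simp
    moreover have "v' \<in> schmidt k" unfolding v'_def by (rule schmidt_scale[OF vS])
    ultimately have "0 \<le> Re (qfo UNIV C v')" using H by blast
    moreover have "qfo UNIV C v' = of_real (1 / r) * qfo UNIV C v"
      unfolding v'_def cinner_mat_vec_qfo[symmetric] qf_scale using r(2) by (simp flip: of_real_mult)
    ultimately have "0 \<le> Re (qfo UNIV C v) / r" by simp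
    then show ?thesis using r(2) by (simp add: zero_le_divide_iff)
  qed
qed auto

lemma kpos_iff:
  fixes \<phi> :: "('k::finite \<Rightarrow> 'k \<Rightarrow> complex) \<Rightarrow> ('h::finite \<Rightarrow> 'h \<Rightarrow> complex)"
  assumes lin: "clinear_map \<phi>" and pos: "positive_map \<phi>"
  shows "k_positive k \<phi> \<longleftrightarrow> (\<forall>v\<in>schmidt k. 0 \<le> Re (qfo UNIV (choi \<phi>) v))"
proof
  assume kp: "k_positive k \<phi>"
  show "\<forall>v\<in>schmidt k. 0 \<le> Re (qfo UNIV (choi \<phi>) v)"
  proof
    fix v :: "'k \<times> 'h \<Rightarrow> complex" assume "v \<in> schmidt k"
    then obtain x y where v: "v = (\<lambda>(a, b). \<Sum>i<k. x i a * y i b)" unfolding schmidt_def by blast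
    show "0 \<le> Re (qfo UNIV (choi \<phi>) v)" unfolding v using KP1[OF lin kp, of x y] by blast
  qed
next
  assume H: "\<forall>v\<in>schmidt k. 0 \<le> Re (qfo UNIV (choi \<phi>) v)"
  show "k_positive k \<phi>"
  proof (rule KP2[OF lin choi_herm[OF lin pos]])
    fix x :: "nat \<Rightarrow> 'k \<Rightarrow> complex" and y :: "nat \<Rightarrow> 'h \<Rightarrow> complex"
    have "(\<lambda>(i, a). \<Sum>p<k. x p i * y p a) \<in> schmidt k" unfolding schmidt_def by blast
    then show "0 \<le> Re (qfo UNIV (choi \<phi>) (\<lambda>(i, a). \<Sum>p<k. x p i * y p a))" using H by blast
  qed
qed

lemma ev_schmidt:
  assumes k1: "k \<ge> 1"
  shows "ev (a0, b0) \<in> schmidt k"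
proof -
  have "ev (a0, b0) = (\<lambda>(a, b). \<Sum>i<k. (\<lambda>i. ev a0) i a * (\<lambda>i. if i = 0 then ev b0 else (\<lambda>_. 0)) i b)"
  proof (intro ext, clarify)
    fix a b
    have "(\<Sum>i<k. ev a0 a * (if i = 0 then ev b0 else (\<lambda>_. 0)) b) = (\<Sum>i<k. if i = 0 then ev a0 a * ev b0 b else 0)"
      by (intro sum.cong refl) auto
    also have "\<dots> = ev a0 a * ev b0 b" using k1 by simp
    also have "\<dots> = ev (a0, b0) (a, b)" unfolding ev_def by simp
    finally show "ev (a0, b0) (a, b) = (\<Sum>i<k. (\<lambda>i. ev a0) i a * (\<lambda>i. if i = 0 then ev b0 else (\<lambda>_. 0)) i b)"
      by simp
  qed
  then show ?thesis unfolding schmidt_def mem_Collect_eq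
    by (intro exI[of _ "\<lambda>i. ev a0"] exI[of _ "\<lambda>i. if i = 0 then ev b0 else (\<lambda>_. 0)"])
qed

theorem theorem4:
  fixes \<phi> :: "('k::finite \<Rightarrow> 'k \<Rightarrow> complex) \<Rightarrow> ('h::finite \<Rightarrow> 'h \<Rightarrow> complex)"
    and k :: nat
  assumes lin: "clinear_map \<phi>"
    and pos: "positive_map \<phi>"
    and k1: "k \<ge> 1"
  shows "(\<phi> \<noteq> (\<lambda>A a b. 0) \<longrightarrow>
           (k_positive k \<phi> \<longleftrightarrow>
              (SUP v\<in>{v \<in> schmidt k. vnorm v = 1}. Re (cinner (mat_vec (choi_cp \<phi>) v) v)) \<le> 1))
       \<and> (\<forall>(x :: nat \<Rightarrow> 'k \<Rightarrow> complex) (y :: nat \<Rightarrow> 'h \<Rightarrow> complex).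
            let v = (\<lambda>(a, b). \<Sum>i<k. x i a * y i b) in
            k < min (card (UNIV :: 'k set)) (card (UNIV :: 'h set)) \<and> vnorm v = 1
            \<and> cinner (mat_vec (choi \<phi>) v) v = 0
            \<and> mat_vec (choi \<phi>) v \<notin> tensor_sub (cspan (x ` {..<k})) (cspan (y ` {..<k}))
            \<longrightarrow> \<not> k_positive (k + 1) \<phi>)"
proof (intro conjI impI allI)
  let ?C = "choi \<phi>"
  have hC: "herm ?C" by (rule choi_herm[OF lin pos])
  assume nz: "\<phi> \<noteq> (\<lambda>A a b. 0)"
  define c where "c = inverse (opnorm (pos_part ?C))"
  have c: "c > 0" unfolding c_def using opnorm_pos[OF pos_part_nonzero[OF lin pos nz]] by simp
  define U where "U = {v \<in> (schmidt k :: ('k \<times> 'h \<Rightarrow> complex) set). vnorm v = 1}"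
  define f where "f = (\<lambda>v. Re (cinner (mat_vec (choi_cp \<phi>) v) v))"
  have fU: "f v = 1 - c * Re (qfo UNIV ?C v)" if "v \<in> U" for v :: "'k \<times> 'h \<Rightarrow> complex"
    using choi_cp_qf[of v \<phi>] that unfolding f_def U_def c_def by simp
  have Une: "U \<noteq> {}"
    using ev_schmidt[OF k1, of undefined undefined] vnorm_ev[of "(undefined, undefined)"]
    unfolding U_def by blast
  have bdd: "bdd_above (f ` U)"
    by (rule bdd_aboveI2[where M="\<Sum>i\<in>UNIV. \<Sum>j\<in>UNIV. cmod (choi_cp \<phi> i j)"])
      (auto simp: f_def U_def cinner_mat_vec_qfo intro: qfo_bound)
  have "(SUP v\<in>U. f v) \<le> 1 \<longleftrightarrow> (\<forall>v\<in>U. f v \<le> 1)" by (rule cSUP_le_iff[OF Une bdd])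
  also have "\<dots> \<longleftrightarrow> (\<forall>v\<in>U. 0 \<le> Re (qfo UNIV ?C v))"
    using fU c by (auto simp: mult_le_0_iff zero_le_mult_iff)
  also have "\<dots> \<longleftrightarrow> (\<forall>v\<in>schmidt k. 0 \<le> Re (qfo UNIV ?C v))"
    unfolding unit_iff U_def by blast
  also have "\<dots> \<longleftrightarrow> k_positive k \<phi>" using kpos_iff[OF lin pos] by simp
  finally show "k_positive k \<phi> \<longleftrightarrow> (SUP v\<in>{v \<in> schmidt k. vnorm v = 1}. Re (cinner (mat_vec (choi_cp \<phi>) v) v)) \<le> 1"
    unfolding U_def f_def by blast
next
  fix x :: "nat \<Rightarrow> 'k \<Rightarrow> complex" and y :: "nat \<Rightarrow> 'h \<Rightarrow> complex"
  let ?C = "choi \<phi>"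
  have hC: "herm ?C" by (rule choi_herm[OF lin pos])
  define v where "v = (\<lambda>(a, b). \<Sum>i<k. x i a * y i b)"
  show "let v = (\<lambda>(a, b). \<Sum>i<k. x i a * y i b) in
            k < min (card (UNIV :: 'k set)) (card (UNIV :: 'h set)) \<and> vnorm v = 1
            \<and> cinner (mat_vec (choi \<phi>) v) v = 0
            \<and> mat_vec (choi \<phi>) v \<notin> tensor_sub (cspan (x ` {..<k})) (cspan (y ` {..<k}))
            \<longrightarrow> \<not> k_positive (k + 1) \<phi>"
    unfolding Let_def v_def[symmetric]
  proof (intro impI notI)
    assume H: "k < min (card (UNIV :: 'k set)) (card (UNIV :: 'h set)) \<and> vnorm v = 1
            \<and> cinner (mat_vec (choi \<phi>) v) v = 0
            \<and> mat_vec (choi \<phi>) v \<notin> tensor_sub (cspan (x ` {..<k})) (cspan (y ` {..<k}))"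
    assume kp: "k_positive (k + 1) \<phi>"
    have q0: "cinner (mat_vec ?C v) v = 0" using H by blast
    have notin: "mat_vec ?C v \<notin> tensor_sub (cspan (x ` {..<k})) (cspan (y ` {..<k}))" using H by blast
    have zero_in: "(\<lambda>z. 0) \<in> tensor_sub X Y" for X :: "('k \<Rightarrow> complex) set" and Y :: "('h \<Rightarrow> complex) set"
      unfolding tensor_sub_def cspan_def by (intro CollectI exI[of _ "{}"]) auto
    have Cv0: "mat_vec ?C v z = 0" for z
    proof -
      obtain j0 b0 where z: "z = (j0, b0)" by (cases z)
      define w where "w = (ev z :: 'k \<times> 'h \<Rightarrow> complex)"
      define a where "a = cinner (mat_vec ?C v) w"
      have aval: "a = mat_vec ?C v z" unfolding a_def w_def by (rule cinner_ev_right)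
      have nn: "0 \<le> Re (cinner (mat_vec ?C (\<lambda>i. v i + t * w i)) (\<lambda>i. v i + t * w i))" for t
      proof -
        define x' where "x' = x(k := (\<lambda>i. t * ev j0 i))"
        define y' where "y' = y(k := ev b0)"
        have "(\<lambda>i. v i + t * w i) = (\<lambda>(a, b). \<Sum>i<k + 1. x' i a * y' i b)"
        proof (intro ext, clarify)
          fix a b
          have "(\<Sum>i<k + 1. x' i a * y' i b) = (\<Sum>i<k. x i a * y i b) + t * ev j0 a * ev b0 b"
            unfolding x'_def y'_def by simp
          also have "t * ev j0 a * ev b0 b = t * w (a, b)" unfolding w_def z ev_def by simp
          finally show "v (a, b) + t * w (a, b) = (\<Sum>i<k + 1. x' i a * y' i b)" unfolding v_def by simp
        qed
        then show ?thesis unfolding cinner_mat_vec_qfo using KP1[OF lin kp, of x' y'] by simp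
      qed
      have exp: "cinner (mat_vec ?C (\<lambda>i. v i + t * w i)) (\<lambda>i. v i + t * w i) =
          cnj t * a + cnj (cnj t * a) + t * cnj t * cinner (mat_vec ?C w) w" for t
        unfolding qf_add[OF hC] qf_scale cinner_scale_right a_def q0 by (simp add: mat_vec_scale cinner_scale_left)
      have "Re a = 0"
      proof -
        have "0 \<le> s * (2 * Re a) + s\<^sup>2 * Re (cinner (mat_vec ?C w) w)" for s :: real
          using nn[of "of_real s"] unfolding exp by (simp add: power2_eq_square)
        then show ?thesis using L0quad[of "2 * Re a" "Re (cinner (mat_vec ?C w) w)"] by simp
      qed
      moreover have "Im a = 0"
      proof -
        have "0 \<le> s * (2 * Im a) + s\<^sup>2 * Re (cinner (mat_vec ?C w) w)" for s :: real
          using nn[of "\<i> * of_real s"] unfolding exp by (simp add: power2_eq_square)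
        then show ?thesis using L0quad[of "2 * Im a" "Re (cinner (mat_vec ?C w) w)"] by simp
      qed
      ultimately show ?thesis using aval by (simp add: complex_eq_iff)
    qed
    then have "mat_vec ?C v = (\<lambda>z. 0)" by (intro ext) simp
    then show False using notin zero_in by simp
  qed
qed

end
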